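(* In the exploration process and with the random variables $M(t,i)$ described in the context, for every $t\in\{0,\dots,n\}$ and every $\lambda>0$, $$\mathbb{P}\Big[M(\tau,i)>-\lambda\ \text{for all }(0,n-a)\le(\tau,i)\le(t,n-a)\Big]\ge 1-\exp\left(-\frac{\lambda^2(1-\hat\pi(t))^3}{2(n\hat\pi(t)+\lambda/3)}\right)$$ and $$\mathbb{P}\Big[M(\tau,i)<\lambda\ \text{for all }(0,n-a)\le(\tau,i)\le(t,n-a)\Big]\ge 1-\exp\left(-\frac{\lambda^2(1-\hat\pi(t))^3}{2(n\hat\pi(t)+\lambda/3)}\right).$$
   Context: Let $r\ge2$, $0<p<1$, and consider the random graph $G(n,p)$ on $[n]$ (each edge independently present with probability $p$). Let the initially infected set be $\mathcal{A}(0)=\{1,\dots,a\}$. Exploration process: set $\mathcal{Z}(0)=\emptyset$. For each step $t=1,\dots,n$: if $\mathcal{A}(t-1)\setminus\mathcal{Z}(t-1)\neq\emptyset$, pick a vertex $u_t$ in it by an arbitrary rule and set $\mathcal{Z}(t)=\mathcal{Z}(t-1)\cup\{u_t\}$; otherwise $\mathcal{Z}(t)=\mathcal{Z}(t-1)$. For $t\ge0$ and $i\in[n-a]$ let $X(t,i)$ be the indicator that vertex $a+i$ has at least $r$ neighbours in $\mathcal{Z}(t)$, and set $\mathcal{A}(t)=\mathcal{A}(0)\cup\{a+i: X(t,i)=1,\ i\in[n-a]\}$. Let $T$ be the smallest $t$ with $\mathcal{A}(t)=\mathcal{Z}(t)$. Let $\hat\pi(t)=\mathbb{P}[\mathrm{Bin}(t,p)\ge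 r]$ and define the random quantity $\pi(t)=\hat\pi(t)$ for $t\le T$ and $\pi(t)=\hat\pi(T)$ for $t>T$. Each step $t\ge1$ is divided into rounds $(t,1),\dots,(t,n-a)$, ordered lexicographically ($(\tau,\iota)<(t,i)$ iff $\tau<t$, or $\tau=t$ and $\iota<i$), preceded by $(0,n-a)$. For $(t,i)\ge(0,n-a)$ define $$M(t,i):=\sum_{j=1}^{i}\frac{X(t,j)-\pi(t)}{1-\pi(t)}+\sum_{j=i+1}^{n-a}\frac{X(t-1,j)-\pi(t-1)}{1-\pi(t-1)}.$$ *)

theory Defs
  imports "HOL-Probability.Probability"
begin

text \<open>A graph on the vertex set [n] = {1..n} is encoded by a function on ordered
  pairs; only the slots (u,v) with 1 <= u < v <= n are relevant (the others are False
  almost surely).\<close>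

type_synonym graph = "nat \<times> nat \<Rightarrow> bool"

definition edge_slots :: "nat \<Rightarrow> (nat \<times> nat) set" where
  "edge_slots n = {(u, v). 1 \<le> u \<and> u < v \<and> v \<le> n}"

definition gnp :: "nat \<Rightarrow> real \<Rightarrow> graph pmf" where
  "gnp n p = Pi_pmf (edge_slots n) False (\<lambda>_. bernoulli_pmf p)"

definition adj :: "graph \<Rightarrow> nat \<Rightarrow> nat \<Rightarrow> bool" where
  "adj G u v = (if u < v then G (u, v) else if v < u then G (v, u) else False)"

definition Aset :: "nat \<Rightarrow> nat \<Rightarrow> nat \<Rightarrow> graph \<Rightarrow> nat list \<Rightarrow> nat set" where
  "Aset n a r G zs = {1..a} \<union>
     {a + i | i. i \<in> {1..n - a} \<and> r \<le> card {v \<in> set zs. adj G (a + i) v}}"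

text \<open>The selection rule sel receives the history of explored vertices and the
  candidate set A(t-1) - Z(t-1), and returns an element of it.\<close>
fun zseq :: "nat \<Rightarrow> nat \<Rightarrow> nat \<Rightarrow> (nat list \<Rightarrow> nat set \<Rightarrow> nat) \<Rightarrow> graph \<Rightarrow> nat \<Rightarrow> nat list" where
  "zseq n a r sel G 0 = []"
| "zseq n a r sel G (Suc t) =
     (let zs = zseq n a r sel G t; C = Aset n a r G zs - set zs
      in if C = {} then zs else zs @ [sel zs C])"

definition Zset :: "nat \<Rightarrow> nat \<Rightarrow> nat \<Rightarrow> (nat list \<Rightarrow> nat set \<Rightarrow> nat) \<Rightarrow> graph \<Rightarrow> nat \<Rightarrow> nat set" where
  "Zset n a r sel G t = set (zseq n a r sel G t)"

definition Aproc :: "nat \<Rightarrow> nat \<Rightarrow> nat \<Rightarrow> (nat list \<Rightarrow> nat set \<Rightarrow> nat) \<Rightarrow> graph \<Rightarrow> nat \<Rightarrow> nat set" where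
  "Aproc n a r sel G t = Aset n a r G (zseq n a r sel G t)"

definition Xind :: "nat \<Rightarrow> nat \<Rightarrow> nat \<Rightarrow> (nat list \<Rightarrow> nat set \<Rightarrow> nat) \<Rightarrow> graph \<Rightarrow> nat \<Rightarrow> nat \<Rightarrow> real" where
  "Xind n a r sel G t i = of_bool (r \<le> card {v \<in> Zset n a r sel G t. adj G (a + i) v})"

definition Tstop :: "nat \<Rightarrow> nat \<Rightarrow> nat \<Rightarrow> (nat list \<Rightarrow> nat set \<Rightarrow> nat) \<Rightarrow> graph \<Rightarrow> nat" where
  "Tstop n a r sel G = (LEAST t. Aproc n a r sel G t = Zset n a r sel G t)"

definition pihat :: "real \<Rightarrow> nat \<Rightarrow> nat \<Rightarrow> real" where
  "pihat p r t = measure_pmf.prob (binomial_pmf t p) {k. r \<le> k}"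

definition piproc :: "nat \<Rightarrow> nat \<Rightarrow> nat \<Rightarrow> (nat list \<Rightarrow> nat set \<Rightarrow> nat) \<Rightarrow> real \<Rightarrow> graph \<Rightarrow> nat \<Rightarrow> real" where
  "piproc n a r sel p G t = pihat p r (min t (Tstop n a r sel G))"

text \<open>M(t,i); only used for rounds (t,i) >= (0,n-a).\<close>
definition Mart :: "nat \<Rightarrow> nat \<Rightarrow> nat \<Rightarrow> (nat list \<Rightarrow> nat set \<Rightarrow> nat) \<Rightarrow> real \<Rightarrow> graph \<Rightarrow> nat \<Rightarrow> nat \<Rightarrow> real" where
  "Mart n a r sel p G t i =
     (\<Sum>j = 1..i. (Xind n a r sel G t j - piproc n a r sel p G t) / (1 - piproc n a r sel p G t))
   + (\<Sum>j = i + 1..n - a. (Xind n a r sel G (t - 1) j - piproc n a r sel p G (t - 1))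
                            / (1 - piproc n a r sel p G (t - 1)))"

text \<open>Rounds (tau,i) with (0,n-a) <= (tau,i) <= (t,n-a) in lexicographic order.\<close>
definition round_in :: "nat \<Rightarrow> nat \<Rightarrow> nat \<Rightarrow> nat \<Rightarrow> nat \<Rightarrow> bool" where
  "round_in n a t \<tau> i \<longleftrightarrow>
     (\<tau> = 0 \<and> i = n - a) \<or> (1 \<le> \<tau> \<and> \<tau> \<le> t \<and> 1 \<le> i \<and> i \<le> n - a)"

end

theory Submission
  imports Defs
begin


lemma exp_le_quad_neg:
  fixes x :: real assumes "x \<le> 0"
  shows "exp x \<le> 1 + x + x\<^sup>2 / 2"
proof -
  obtain t where t: "exp x = (\<Sum>m<3. (x ^ m) / fact m) + (exp t / fact 3) * x ^ 3"
    using Maclaurin_exp_le[of x 3] by blast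
  have "x ^ 3 \<le> 0" using assms by (simp add: power_le_zero_eq)
  hence "exp t * x ^ 3 \<le> 0" by (intro mult_nonneg_nonpos) simp_all
  hence "(exp t / fact 3) * x ^ 3 \<le> 0" by (simp add: divide_nonpos_pos)
  moreover have "(\<Sum>m<3. (x ^ m) / fact m) = 1 + x + x\<^sup>2 / 2"
    by (simp add: eval_nat_numeral fact_numeral)
  ultimately show ?thesis using t by linarith
qed

lemma exp_le_quad_pos:
  fixes x :: real assumes a: "0 \<le> x" and b: "x < 3"
  shows "exp x \<le> 1 + x + x\<^sup>2 / (2 * (1 - x / 3))"
proof -
  have q: "norm (x/3) < 1" using a b by simp
  have sumsx: "(\<lambda>n. x\<^sup>2 / 2 * (x/3) ^ n) sums (x\<^sup>2 / 2 * (1 / (1 - x/3)))"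
    by (intro sums_mult geometric_sums q)
  have "suminf (\<lambda>n. inverse(fact (n+2)) * (x ^ (n + 2))) \<le> suminf (\<lambda>n. (x\<^sup>2/2) * ((x/3)^n))"
  proof (intro suminf_le allI)
    show "inverse (fact (n + 2)) * x ^ (n + 2) \<le> (x\<^sup>2/2) * ((x/3)^n)" for n :: nat
    proof -
      have "(2::nat) * 3 ^ n \<le> fact (n + 2)"
        by (induct n) simp_all
      then have "real ((2::nat) * 3 ^ n) \<le> real_of_nat (fact (n + 2))"
        by (simp only: of_nat_le_iff)
      then have "((2::real) * 3 ^ n) \<le> fact (n + 2)"
        unfolding of_nat_fact by simp
      then have "inverse (fact (n + 2)) \<le> inverse ((2::real) * 3 ^ n)"
        by (rule le_imp_inverse_le) simp
      then have "inverse (fact (n + 2)) * (x^n * x\<^sup>2) \<le> inverse ((2::real) * 3 ^ n) * (x^n * x\<^sup>2)"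
        by (rule mult_right_mono) (simp add: a)
      also have "\<dots> = (x\<^sup>2/2) * ((x/3)^n)"
        by (simp add: power_divide field_simps)
      finally show ?thesis
        unfolding power_add by (simp add: ac_simps del: fact_Suc)
    qed
    show "summable (\<lambda>n. inverse (fact (n + 2)) * x ^ (n + 2))"
      by (rule summable_exp [THEN summable_ignore_initial_segment])
    show "summable (\<lambda>n. x\<^sup>2 / 2 * (x/3) ^ n)"
      by (rule sums_summable [OF sumsx])
  qed
  also have "\<dots> = x\<^sup>2 / 2 * (1 / (1 - x/3))"
    by (rule sums_unique [THEN sym]) (rule sumsx)
  also have "\<dots> = x\<^sup>2 / (2 * (1 - x / 3))" using b by (simp add: field_simps)
  finally show ?thesis
    unfolding exp_first_two_terms by auto
qed

lemma exp_le_quad: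
  fixes x c :: real assumes "x \<le> c" "0 \<le> c" "c < 3"
  shows "exp x \<le> 1 + x + x\<^sup>2 / (2 * (1 - c / 3))"
proof (cases "x \<le> 0")
  case True
  have "x\<^sup>2 / 2 \<le> x\<^sup>2 / (2 * (1 - c / 3))"
    using assms by (intro divide_left_mono) (auto simp: field_simps)
  thus ?thesis using exp_le_quad_neg[OF True] by linarith
next
  case False
  have p1: "0 < 2 * (1 - x / 3)" "0 < 2 * (1 - c / 3)" using assms False by auto
  have "x\<^sup>2 / (2 * (1 - x / 3)) \<le> x\<^sup>2 / (2 * (1 - c / 3))"
    using assms False p1 by (intro divide_left_mono) (auto intro: mult_pos_pos)
  thus ?thesis using exp_le_quad_pos[of x] False assms by linarith
qed


lemma fiber_bound:
  fixes F :: "'a set" and w D :: "'a \<Rightarrow> real"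
  assumes fin: "finite F" and w: "\<And>\<omega>. \<omega>\<in>F \<Longrightarrow> 0 \<le> w \<omega>"
  and mean: "(\<Sum>\<omega>\<in>F. w \<omega> * D \<omega>) = 0"
  and var: "(\<Sum>\<omega>\<in>F. w \<omega> * (D \<omega>)\<^sup>2) \<le> v * (\<Sum>\<omega>\<in>F. w \<omega>)"
  and bnd: "\<And>\<omega>. \<omega>\<in>F \<Longrightarrow> \<theta> * D \<omega> \<le> c" and c: "0 \<le> c" "c < 3"
  shows "(\<Sum>\<omega>\<in>F. w \<omega> * exp (\<theta> * D \<omega>)) \<le> exp (\<theta>\<^sup>2 * v / (2*(1-c/3))) * (\<Sum>\<omega>\<in>F. w \<omega>)"
proof -
  define k where "k = 2*(1-c/3)"
  have kpos: "k > 0" using c by (simp add: k_def)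
  have "(\<Sum>\<omega>\<in>F. w \<omega> * exp (\<theta> * D \<omega>)) \<le> (\<Sum>\<omega>\<in>F. w \<omega> * (1 + \<theta> * D \<omega> + (\<theta> * D \<omega>)\<^sup>2 / k))"
    unfolding k_def using w bnd c by (intro sum_mono mult_left_mono exp_le_quad) auto
  also have "\<dots> = (\<Sum>\<omega>\<in>F. w \<omega>) + \<theta> * (\<Sum>\<omega>\<in>F. w \<omega> * D \<omega>) + \<theta>\<^sup>2 / k * (\<Sum>\<omega>\<in>F. w \<omega> * (D \<omega>)\<^sup>2)"
    by (simp add: sum.distrib sum_distrib_left algebra_simps power_mult_distrib)
  also have "\<dots> \<le> (\<Sum>\<omega>\<in>F. w \<omega>) + \<theta>\<^sup>2 / k * (v * (\<Sum>\<omega>\<in>F. w \<omega>))"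
  proof -
    have "\<theta>\<^sup>2 / k * (\<Sum>\<omega>\<in>F. w \<omega> * (D \<omega>)\<^sup>2) \<le> \<theta>\<^sup>2 / k * (v * (\<Sum>\<omega>\<in>F. w \<omega>))"
      using var kpos by (intro mult_left_mono) auto
    thus ?thesis using mean by simp
  qed
  also have "\<dots> = (1 + \<theta>\<^sup>2 * v / k) * (\<Sum>\<omega>\<in>F. w \<omega>)" by (simp add: algebra_simps)
  also have "\<dots> \<le> exp (\<theta>\<^sup>2 * v / k) * (\<Sum>\<omega>\<in>F. w \<omega>)"
    using w by (intro mult_right_mono sum_nonneg) (auto simp: add.commute)
  finally show ?thesis by (simp add: k_def)
qed

lemma freedman_fin:
  fixes \<Omega> :: "'a set" and w :: "'a \<Rightarrow> real" and D :: "nat \<Rightarrow> 'a \<Rightarrow> real"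
    and \<psi> :: "nat \<Rightarrow> 'a \<Rightarrow> 'b" and v :: "nat \<Rightarrow> real" and b lam :: real and K :: nat
  assumes fin: "finite \<Omega>" and wpos: "\<And>\<omega>. \<omega>\<in>\<Omega> \<Longrightarrow> 0 \<le> w \<omega>"
  and mean: "\<And>k y. k \<in> {1..K} \<Longrightarrow> (\<Sum>\<omega>\<in>{\<omega>\<in>\<Omega>. \<psi> k \<omega> = y}. w \<omega> * D k \<omega>) = 0"
  and var: "\<And>k y. k \<in> {1..K} \<Longrightarrow> (\<Sum>\<omega>\<in>{\<omega>\<in>\<Omega>. \<psi> k \<omega> = y}. w \<omega> * (D k \<omega>)\<^sup>2)
              \<le> v k * (\<Sum>\<omega>\<in>{\<omega>\<in>\<Omega>. \<psi> k \<omega> = y}. w \<omega>)"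
  and bnd: "\<And>k \<omega>. k \<in> {1..K} \<Longrightarrow> \<omega> \<in> \<Omega> \<Longrightarrow> D k \<omega> \<le> b"
  and meas: "\<And>k l \<omega> \<omega>'. k \<in> {1..K} \<Longrightarrow> 1 \<le> l \<Longrightarrow> l < k \<Longrightarrow> \<omega> \<in> \<Omega> \<Longrightarrow> \<omega>' \<in> \<Omega>
               \<Longrightarrow> \<psi> k \<omega> = \<psi> k \<omega>' \<Longrightarrow> D l \<omega> = D l \<omega>'"
  and vpos: "\<And>k. v k \<ge> 0" and b: "b > 0" and lam: "lam > 0"
  shows "(\<Sum>\<omega>\<in>{\<omega>\<in>\<Omega>. \<exists>m\<in>{1..K}. lam \<le> (\<Sum>l=1..m. D l \<omega>)}. w \<omega>)
         \<le> exp (- lam\<^sup>2 / (2 * ((\<Sum>k=1..K. v k) + b * lam / 3))) * (\<Sum>\<omega>\<in>\<Omega>. w \<omega>)"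
proof -
  define P where "P m \<omega> = (\<Sum>j=1..m. D j \<omega>)" for m \<omega>
  define I where "I l \<omega> \<longleftrightarrow> (\<forall>m\<in>{1..<l}. P m \<omega> < lam)" for l \<omega>
  define D' where "D' l \<omega> = (if I l \<omega> then D l \<omega> else 0)" for l \<omega>
  define S where "S k \<omega> = (\<Sum>l=1..k. D' l \<omega>)" for k \<omega>
  define E where "E = {\<omega>\<in>\<Omega>. \<exists>m\<in>{1..K}. lam \<le> P m \<omega>}"
  define V where "V = (\<Sum>k=1..K. v k)"
  have Wnn: "0 \<le> (\<Sum>\<omega>\<in>\<Omega>. w \<omega>)" using wpos by (simp add: sum_nonneg)
  have measI: "I l \<omega> = I l \<omega>'" if "k \<in> {1..K}" "l \<le> k" "\<omega> \<in> \<Omega>" "\<omega>' \<in> \<Omega>" "\<psi> k \<omega> = \<psi> k \<omega>'" for k l \<omega> \<omega>'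
  proof -
    have "P m \<omega> = P m \<omega>'" if "m \<in> {1..<l}" for m
      unfolding P_def
    proof (intro sum.cong refl)
      fix j assume "j \<in> {1..m}"
      thus "D j \<omega> = D j \<omega>'"
        using that \<open>l \<le> k\<close> \<open>k \<in> {1..K}\<close> \<open>\<omega> \<in> \<Omega>\<close> \<open>\<omega>' \<in> \<Omega>\<close> \<open>\<psi> k \<omega> = \<psi> k \<omega>'\<close>
        by (intro meas[of k j \<omega> \<omega>']) auto
    qed
    thus ?thesis unfolding I_def by auto
  qed
  have measS: "S (k - 1) \<omega> = S (k - 1) \<omega>'" if "k \<in> {1..K}" "\<omega> \<in> \<Omega>" "\<omega>' \<in> \<Omega>" "\<psi> k \<omega> = \<psi> k \<omega>'" for k \<omega> \<omega>'
    unfolding S_def D'_def using that measI[OF that(1) _ that(2-4)]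
    by (intro sum.cong refl) (auto intro: meas)
  have incl: "lam \<le> S K \<omega>" if "\<omega> \<in> E" for \<omega>
  proof -
    from that obtain m where m: "m \<in> {1..K}" "lam \<le> P m \<omega>" unfolding E_def by blast
    define m0 where "m0 = (LEAST m. m \<in> {1..K} \<and> lam \<le> P m \<omega>)"
    have m0: "m0 \<in> {1..K}" "lam \<le> P m0 \<omega>"
      using LeastI[of "\<lambda>m. m \<in> {1..K} \<and> lam \<le> P m \<omega>" m] m unfolding m0_def by auto
    have lt: "P m' \<omega> < lam" if "m' \<in> {1..K}" "m' < m0" for m'
      using not_less_Least[of m' "\<lambda>m. m \<in> {1..K} \<and> lam \<le> P m \<omega>"] that unfolding m0_def by auto
    have un: "{1..K} = {1..m0} \<union> {Suc m0..K}" using m0 by auto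
    have "S K \<omega> = (\<Sum>l=1..m0. D' l \<omega>) + (\<Sum>l=Suc m0..K. D' l \<omega>)"
      unfolding S_def un by (rule sum.union_disjoint) auto
    also have "(\<Sum>l=Suc m0..K. D' l \<omega>) = 0"
    proof (intro sum.neutral ballI)
      fix l assume "l \<in> {Suc m0..K}"
      hence "m0 \<in> {1..<l}" using m0 by auto
      hence "\<not> I l \<omega>" using m0 unfolding I_def by force
      thus "D' l \<omega> = 0" by (simp add: D'_def)
    qed
    also have "(\<Sum>l=1..m0. D' l \<omega>) = P m0 \<omega>"
      unfolding P_def
    proof (intro sum.cong refl)
      fix l assume l: "l \<in> {1..m0}"
      have "I l \<omega>" unfolding I_def using lt l m0 by auto
      thus "D' l \<omega> = D l \<omega>" by (simp add: D'_def)
    qed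
    finally show ?thesis using m0 by simp
  qed
  have expm: "(\<Sum>\<omega>\<in>\<Omega>. w \<omega> * exp (\<theta> * S k \<omega>)) \<le> exp (\<theta>\<^sup>2 * (\<Sum>l=1..k. v l) / (2*(1-\<theta>*b/3))) * (\<Sum>\<omega>\<in>\<Omega>. w \<omega>)"
    if th: "0 < \<theta>" "\<theta> * b < 3" and "k \<le> K" for \<theta> k
    using \<open>k \<le> K\<close>
  proof (induction k)
    case 0
    then show ?case by (simp add: S_def)
  next
    case (Suc k)
    define \<kappa> where "\<kappa> = 2*(1-\<theta>*b/3)"
    have kpos: "\<kappa> > 0" using th by (simp add: \<kappa>_def)
    have k': "Suc k \<in> {1..K}" using Suc by auto
    let ?g = "\<lambda>\<omega>. w \<omega> * exp (\<theta> * S k \<omega>) * exp (\<theta> * D' (Suc k) \<omega>)"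
    have fib: "(\<Sum>\<omega>\<in>{\<omega>\<in>\<Omega>. \<psi> (Suc k) \<omega> = y}. ?g \<omega>)
          \<le> exp (\<theta>\<^sup>2 * v (Suc k) / \<kappa>) * (\<Sum>\<omega>\<in>{\<omega>\<in>\<Omega>. \<psi> (Suc k) \<omega> = y}. w \<omega> * exp (\<theta> * S k \<omega>))" for y
    proof (cases "{\<omega>\<in>\<Omega>. \<psi> (Suc k) \<omega> = y} = {}")
      case True show ?thesis by (simp only: True sum.empty mult_zero_right order.refl)
    next
      case False
      define F where "F = {\<omega>\<in>\<Omega>. \<psi> (Suc k) \<omega> = y}"
      from False obtain \<omega>0 where \<omega>0: "\<omega>0 \<in> F" unfolding F_def by blast
      have finF: "finite F" unfolding F_def using fin by simp
      have Seq: "S k \<omega> = S k \<omega>0" if "\<omega> \<in> F" for \<omega>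
        using measS[OF k', of \<omega> \<omega>0] that \<omega>0 unfolding F_def by auto
      have Ieq: "I (Suc k) \<omega> = I (Suc k) \<omega>0" if "\<omega> \<in> F" for \<omega>
        using measI[OF k' order.refl, of \<omega> \<omega>0] that \<omega>0 unfolding F_def by auto
      have wF: "\<And>\<omega>. \<omega> \<in> F \<Longrightarrow> 0 \<le> w \<omega>" using wpos unfolding F_def by auto
      have inner: "(\<Sum>\<omega>\<in>F. w \<omega> * exp (\<theta> * D' (Suc k) \<omega>)) \<le> exp (\<theta>\<^sup>2 * v (Suc k) / \<kappa>) * (\<Sum>\<omega>\<in>F. w \<omega>)"
      proof (cases "I (Suc k) \<omega>0")
        case True
        have "(\<Sum>\<omega>\<in>F. w \<omega> * exp (\<theta> * D' (Suc k) \<omega>)) = (\<Sum>\<omega>\<in>F. w \<omega> * exp (\<theta> * D (Suc k) \<omega>))"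
          using Ieq True by (intro sum.cong refl) (auto simp: D'_def)
        also have "\<dots> \<le> exp (\<theta>\<^sup>2 * v (Suc k) / \<kappa>) * (\<Sum>\<omega>\<in>F. w \<omega>)"
          unfolding \<kappa>_def
        proof (rule fiber_bound[OF finF wF])
          show "(\<Sum>\<omega>\<in>F. w \<omega> * D (Suc k) \<omega>) = 0" unfolding F_def by (rule mean[OF k'])
          show "(\<Sum>\<omega>\<in>F. w \<omega> * (D (Suc k) \<omega>)\<^sup>2) \<le> v (Suc k) * (\<Sum>\<omega>\<in>F. w \<omega>)" unfolding F_def by (rule var[OF k'])
          show "\<theta> * D (Suc k) \<omega> \<le> \<theta> * b" if "\<omega> \<in> F" for \<omega>
            using bnd[OF k', of \<omega>] that th unfolding F_def by (auto intro: mult_left_mono)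
          show "0 \<le> \<theta> * b" using th b by simp
          show "\<theta> * b < 3" by fact
        qed
        finally show ?thesis .
      next
        case False
        have "(\<Sum>\<omega>\<in>F. w \<omega> * exp (\<theta> * D' (Suc k) \<omega>)) = (\<Sum>\<omega>\<in>F. w \<omega>)"
          using Ieq False by (intro sum.cong refl) (auto simp: D'_def)
        also have "\<dots> \<le> exp (\<theta>\<^sup>2 * v (Suc k) / \<kappa>) * (\<Sum>\<omega>\<in>F. w \<omega>)"
        proof -
          have e1: "1 \<le> exp (\<theta>\<^sup>2 * v (Suc k) / \<kappa>)" using kpos vpos[of "Suc k"] by simp
          have "0 \<le> (\<Sum>\<omega>\<in>F. w \<omega>)" using wF by (simp add: sum_nonneg)
          from mult_right_mono[OF e1 this] show ?thesis by simp
        qed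
        finally show ?thesis .
      qed
      have "(\<Sum>\<omega>\<in>F. ?g \<omega>) = exp (\<theta> * S k \<omega>0) * (\<Sum>\<omega>\<in>F. w \<omega> * exp (\<theta> * D' (Suc k) \<omega>))"
        using Seq by (simp add: sum_distrib_left mult_ac)
      also have "\<dots> \<le> exp (\<theta> * S k \<omega>0) * (exp (\<theta>\<^sup>2 * v (Suc k) / \<kappa>) * (\<Sum>\<omega>\<in>F. w \<omega>))"
        by (intro mult_left_mono inner) simp
      also have "\<dots> = exp (\<theta>\<^sup>2 * v (Suc k) / \<kappa>) * (\<Sum>\<omega>\<in>F. w \<omega> * exp (\<theta> * S k \<omega>))"
        using Seq by (simp add: sum_distrib_left sum_distrib_right mult_ac)
      finally show ?thesis unfolding F_def .
    qed
    have Sk: "S (Suc k) \<omega> = S k \<omega> + D' (Suc k) \<omega>" for \<omega> by (simp add: S_def)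
    have "(\<Sum>\<omega>\<in>\<Omega>. w \<omega> * exp (\<theta> * S (Suc k) \<omega>)) = (\<Sum>\<omega>\<in>\<Omega>. ?g \<omega>)"
      by (simp add: Sk distrib_left exp_add mult_ac)
    also have "\<dots> = (\<Sum>y\<in>\<psi> (Suc k) ` \<Omega>. \<Sum>\<omega>\<in>{\<omega>\<in>\<Omega>. \<psi> (Suc k) \<omega> = y}. ?g \<omega>)"
      by (rule sum.image_gen[OF fin])
    also have "\<dots> \<le> (\<Sum>y\<in>\<psi> (Suc k) ` \<Omega>. exp (\<theta>\<^sup>2 * v (Suc k) / \<kappa>) * (\<Sum>\<omega>\<in>{\<omega>\<in>\<Omega>. \<psi> (Suc k) \<omega> = y}. w \<omega> * exp (\<theta> * S k \<omega>)))"
      by (intro sum_mono fib)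
    also have "\<dots> = exp (\<theta>\<^sup>2 * v (Suc k) / \<kappa>) * (\<Sum>\<omega>\<in>\<Omega>. w \<omega> * exp (\<theta> * S k \<omega>))"
      by (simp add: sum_distrib_left[symmetric] sum.image_gen[OF fin, symmetric])
    also have "\<dots> \<le> exp (\<theta>\<^sup>2 * v (Suc k) / \<kappa>) * (exp (\<theta>\<^sup>2 * (\<Sum>l=1..k. v l) / \<kappa>) * (\<Sum>\<omega>\<in>\<Omega>. w \<omega>))"
      using Suc by (intro mult_left_mono) (auto simp: \<kappa>_def)
    also have "\<dots> = exp (\<theta>\<^sup>2 * (\<Sum>l=1..Suc k. v l) / \<kappa>) * (\<Sum>\<omega>\<in>\<Omega>. w \<omega>)"
      by (simp add: exp_add[symmetric] add_divide_distrib distrib_left add.commute)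
    finally show ?case by (simp add: \<kappa>_def)
  qed
  have markov: "(\<Sum>\<omega>\<in>E. w \<omega>) \<le> exp (- \<theta> * lam + \<theta>\<^sup>2 * V / (2*(1-\<theta>*b/3))) * (\<Sum>\<omega>\<in>\<Omega>. w \<omega>)"
    if th: "0 < \<theta>" "\<theta> * b < 3" for \<theta>
  proof -
    have "(\<Sum>\<omega>\<in>E. w \<omega>) \<le> (\<Sum>\<omega>\<in>E. w \<omega> * exp (\<theta> * (S K \<omega> - lam)))"
    proof (intro sum_mono)
      fix \<omega> assume "\<omega> \<in> E"
      hence "1 \<le> exp (\<theta> * (S K \<omega> - lam))" using incl th by auto
      moreover have "0 \<le> w \<omega>" using \<open>\<omega> \<in> E\<close> wpos unfolding E_def by auto
      ultimately show "w \<omega> \<le> w \<omega> * exp (\<theta> * (S K \<omega> - lam))"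
        by (metis mult.right_neutral mult_left_mono)
    qed
    also have "\<dots> \<le> (\<Sum>\<omega>\<in>\<Omega>. w \<omega> * exp (\<theta> * (S K \<omega> - lam)))"
      using fin wpos by (intro sum_mono2) (auto simp: E_def)
    also have "\<dots> = exp (- \<theta> * lam) * (\<Sum>\<omega>\<in>\<Omega>. w \<omega> * exp (\<theta> * S K \<omega>))"
      by (simp add: sum_distrib_left right_diff_distrib exp_diff exp_minus field_simps)
    also have "\<dots> \<le> exp (- \<theta> * lam) * (exp (\<theta>\<^sup>2 * V / (2*(1-\<theta>*b/3))) * (\<Sum>\<omega>\<in>\<Omega>. w \<omega>))"
      unfolding V_def by (intro mult_left_mono expm th) auto
    also have "\<dots> = exp (- \<theta> * lam + \<theta>\<^sup>2 * V / (2*(1-\<theta>*b/3))) * (\<Sum>\<omega>\<in>\<Omega>. w \<omega>)"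
      by (simp add: exp_add[symmetric])
    finally show ?thesis .
  qed
  have Vnn: "V \<ge> 0" unfolding V_def using vpos by (simp add: sum_nonneg)
  show ?thesis
  proof (cases "V = 0")
    case True
    have v0: "v k = 0" if "k \<in> {1..K}" for k
      using True vpos that unfolding V_def by (subst (asm) sum_nonneg_eq_0_iff) auto
    have D0: "D k \<omega> = 0" if "k \<in> {1..K}" "\<omega> \<in> \<Omega>" "w \<omega> > 0" for k \<omega>
    proof -
      let ?F = "{\<omega>'\<in>\<Omega>. \<psi> k \<omega>' = \<psi> k \<omega>}"
      have "(\<Sum>\<omega>'\<in>?F. w \<omega>' * (D k \<omega>')\<^sup>2) \<le> 0" using var[OF that(1), of "\<psi> k \<omega>"] v0[OF that(1)] by simp
      moreover have "\<forall>\<omega>'\<in>?F. 0 \<le> w \<omega>' * (D k \<omega>')\<^sup>2" using wpos by auto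
      moreover have finF: "finite ?F" using fin by simp
      moreover have "0 \<le> (\<Sum>\<omega>'\<in>?F. w \<omega>' * (D k \<omega>')\<^sup>2)"
        using wpos by (intro sum_nonneg) auto
      ultimately have "(\<Sum>\<omega>'\<in>?F. w \<omega>' * (D k \<omega>')\<^sup>2) = 0"
        by linarith
      hence "\<forall>\<omega>'\<in>?F. w \<omega>' * (D k \<omega>')\<^sup>2 = 0"
        using \<open>\<forall>\<omega>'\<in>?F. 0 \<le> w \<omega>' * (D k \<omega>')\<^sup>2\<close> by (subst (asm) sum_nonneg_eq_0_iff[OF finF]) auto
      hence "w \<omega> * (D k \<omega>)\<^sup>2 = 0" using that by auto
      thus ?thesis using that by simp
    qed
    have "(\<Sum>\<omega>\<in>E. w \<omega>) = 0"
    proof (intro sum.neutral ballI)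
      fix \<omega> assume "\<omega> \<in> E"
      then obtain m where m: "\<omega> \<in> \<Omega>" "m \<in> {1..K}" "lam \<le> P m \<omega>" unfolding E_def by blast
      show "w \<omega> = 0"
      proof (rule ccontr)
        assume "w \<omega> \<noteq> 0"
        hence "w \<omega> > 0" using wpos m by force
        hence "P m \<omega> = 0" unfolding P_def using D0 m by (intro sum.neutral) auto
        thus False using m lam by simp
      qed
    qed
    thus ?thesis unfolding E_def P_def using Wnn by simp
  next
    case False
    hence Vp: "V > 0" using Vnn by simp
    define B where "B = V + b * lam / 3"
    have "b * lam > 0" using b lam by simp
    hence Bp: "B > 0" using Vp by (simp add: B_def)
    define \<theta> where "\<theta> = lam / B"
    have thp: "0 < \<theta>" using lam Bp by (simp add: \<theta>_def)
    have thb: "\<theta> * b < 3" using Vp Bp b lam by (simp add: \<theta>_def B_def field_simps)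
    have one: "1 - \<theta> * b / 3 = V / B" using Bp by (simp add: \<theta>_def B_def field_simps)
    have "- \<theta> * lam + \<theta>\<^sup>2 * V / (2*(1-\<theta>*b/3)) = - lam\<^sup>2 / (2 * B)"
      unfolding one using Bp Vp by (simp add: \<theta>_def field_simps power2_eq_square)
    hence "(\<Sum>\<omega>\<in>E. w \<omega>) \<le> exp (- lam\<^sup>2 / (2 * B)) * (\<Sum>\<omega>\<in>\<Omega>. w \<omega>)"
      using markov[OF thp thb] by simp
    thus ?thesis unfolding E_def P_def B_def V_def by simp
  qed
qed


locale proc =
  fixes n a r :: nat and sel :: "nat list \<Rightarrow> nat set \<Rightarrow> nat"
  assumes a_le: "a \<le> n"
    and sel: "\<And>xs S. finite S \<Longrightarrow> S \<noteq> {} \<Longrightarrow> sel xs S \<in> S"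
    and r_pos: "1 \<le> r"
begin

abbreviation Z where "Z G t \<equiv> zseq n a r sel G t"
abbreviation AS where "AS G zs \<equiv> Aset n a r G zs"

lemma Aset_sub: "AS G zs \<subseteq> {1..n}"
  using a_le unfolding Aset_def by auto

lemma fin_Aset: "finite (AS G zs)"
  using Aset_sub finite_subset by blast

lemma Aset_mono: "set zs \<subseteq> set zs' \<Longrightarrow> AS G zs \<subseteq> AS G zs'"
proof
  fix x assume sub: "set zs \<subseteq> set zs'" and x: "x \<in> AS G zs"
  have cm: "card {v \<in> set zs. adj G (a+i) v} \<le> card {v \<in> set zs'. adj G (a+i) v}" for i
    using sub by (intro card_mono) auto
  show "x \<in> AS G zs'"
  proof (cases "x \<in> {1..a}")
    case True then show ?thesis unfolding Aset_def by simp
  next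
    case False
    then obtain i where i: "x = a + i" "i \<in> {1..n-a}" "r \<le> card {v \<in> set zs. adj G (a + i) v}"
      using x unfolding Aset_def by blast
    have "r \<le> card {v \<in> set zs'. adj G (a + i) v}" using i(3) cm[of i] by linarith
    then show ?thesis using i unfolding Aset_def by blast
  qed
qed

lemma zseq_step: "Z G (Suc t) = (if AS G (Z G t) - set (Z G t) = {} then Z G t
     else Z G t @ [sel (Z G t) (AS G (Z G t) - set (Z G t))])"
  by (simp add: Let_def)

declare zseq.simps(2)[simp del]

lemma sel_in: "AS G zs - set zs \<noteq> {} \<Longrightarrow> sel xs (AS G zs - set zs) \<in> AS G zs - set zs"
proof -
  assume ne: "AS G zs - set zs \<noteq> {}"
  have "finite (AS G zs - set zs)" using fin_Aset by simp
  from sel[OF this ne] show ?thesis .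
qed

lemma Z_sub_A: "set (Z G t) \<subseteq> AS G (Z G t)"
proof (induction t)
  case 0 then show ?case by simp
next
  case (Suc t)
  show ?case
  proof (cases "AS G (Z G t) - set (Z G t) = {}")
    case True then show ?thesis using Suc by (simp add: zseq_step)
  next
    case False
    have "set (Z G (Suc t)) = insert (sel (Z G t) (AS G (Z G t) - set (Z G t))) (set (Z G t))"
      using False by (simp add: zseq_step)
    also have "\<dots> \<subseteq> AS G (Z G t)" using sel_in[OF False] Suc by auto
    also have "\<dots> \<subseteq> AS G (Z G (Suc t))"
      by (rule Aset_mono) (auto simp: zseq_step)
    finally show ?thesis .
  qed
qed

lemma Z_range: "set (Z G t) \<subseteq> {1..n}"
  using Z_sub_A Aset_sub by blast

lemma Z_distinct: "distinct (Z G t)"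
proof (induction t)
  case 0 then show ?case by simp
next
  case (Suc t)
  then show ?case using sel_in[of G "Z G t" "Z G t"] by (auto simp: zseq_step)
qed

lemma Z_mono_Suc: "set (Z G t) \<subseteq> set (Z G (Suc t))"
  by (auto simp: zseq_step)

lemma Z_mono: "s \<le> t \<Longrightarrow> set (Z G s) \<subseteq> set (Z G t)"
  by (rule lift_Suc_mono_le[of "\<lambda>t. set (Z G t)"]) (rule Z_mono_Suc)

definition stalled where "stalled G t \<longleftrightarrow> Aproc n a r sel G t = Zset n a r sel G t"

lemma stalled_iff: "stalled G t \<longleftrightarrow> AS G (Z G t) - set (Z G t) = {}"
  unfolding stalled_def Aproc_def Zset_def using Z_sub_A[of G t] by auto

lemma stall_const: "stalled G t \<Longrightarrow> Z G (t + k) = Z G t"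
proof (induction k)
  case 0 then show ?case by simp
next
  case (Suc k)
  then have "stalled G (t + k)" unfolding stalled_iff by simp
  then show ?case using Suc by (simp add: zseq_step stalled_iff)
qed

lemma nostall_len: "\<not> stalled G t \<Longrightarrow> length (Z G (Suc t)) = Suc (length (Z G t))"
  by (simp add: zseq_step stalled_iff)

lemma len_le: "length (Z G t) \<le> t"
  by (induction t) (auto simp: zseq_step)

lemma ex_stall: "\<exists>t. stalled G t"
proof (rule ccontr)
  assume "\<not> (\<exists>t. stalled G t)"
  hence ns: "\<And>t. \<not> stalled G t" by blast
  have len: "length (Z G t) = t" for t
    by (induction t) (simp_all add: nostall_len[OF ns])
  have "card (set (Z G (Suc n))) = Suc n"
    using distinct_card[OF Z_distinct] len by simp
  moreover have "card (set (Z G (Suc n))) \<le> card {1..n}"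
    using Z_range by (intro card_mono) auto
  ultimately show False by simp
qed

lemma Tstop_stalled: "stalled G (Tstop n a r sel G)"
proof -
  from ex_stall[of G] have "\<exists>t. Aproc n a r sel G t = Zset n a r sel G t" unfolding stalled_def .
  from LeastI_ex[OF this] show ?thesis unfolding Tstop_def stalled_def .
qed

lemma before_Tstop: "t < Tstop n a r sel G \<Longrightarrow> \<not> stalled G t"
  unfolding Tstop_def stalled_def by (rule not_less_Least)

lemma len_min: "length (Z G s) = min s (Tstop n a r sel G)"
proof -
  define T where "T = Tstop n a r sel G"
  have low: "s \<le> T \<Longrightarrow> length (Z G s) = s" for s
  proof (induction s)
    case 0 then show ?case by simp
  next
    case (Suc s)
    then have "\<not> stalled G s" using before_Tstop unfolding T_def by simp
    then show ?case using Suc by (simp add: nostall_len)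
  qed
  show ?thesis
  proof (cases "s \<le> T")
    case True then show ?thesis using low unfolding T_def by simp
  next
    case False
    then have "Z G s = Z G (T + (s - T))" by simp
    also have "\<dots> = Z G T" using stall_const Tstop_stalled unfolding T_def by blast
    finally show ?thesis using low[of T] False unfolding T_def by simp
  qed
qed

lemma piproc_len: "piproc n a r sel p G s = pihat p r (length (Z G s))"
  unfolding piproc_def len_min ..

lemma Xind_01: "Xind n a r sel G s j = 0 \<or> Xind n a r sel G s j = 1"
  unfolding Xind_def by simp

lemma Xind_mono: "s \<le> s' \<Longrightarrow> Xind n a r sel G s j \<le> Xind n a r sel G s' j"
proof -
  assume "s \<le> s'"
  hence "card {v \<in> Zset n a r sel G s. adj G (a + j) v} \<le> card {v \<in> Zset n a r sel G s'. adj G (a + j) v}"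
    unfolding Zset_def using Z_mono[of s s' G] by (intro card_mono) auto
  thus ?thesis unfolding Xind_def by auto
qed

lemma Xind_0: "Xind n a r sel G 0 j = 0"
  unfolding Xind_def Zset_def using r_pos by simp

definition clr :: "nat \<Rightarrow> graph \<Rightarrow> graph" where
  "clr w G = (\<lambda>e. if fst e = w \<or> snd e = w then False else G e)"

lemma adj_clr: "x \<noteq> w \<Longrightarrow> v \<noteq> w \<Longrightarrow> adj (clr w G) x v = adj G x v"
  unfolding adj_def clr_def by auto

lemma adj_clr_w: "\<not> adj (clr w G) w v"
  unfolding adj_def clr_def by auto

lemma w_notin_A: "a < w \<Longrightarrow> (\<And>v. \<not> adj G' w v) \<Longrightarrow> w \<notin> AS G' zs"
  unfolding Aset_def using r_pos by auto

lemma w_notin_Z_clr: "a < w \<Longrightarrow> w \<notin> set (Z (clr w G) s)"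
  using Z_sub_A w_notin_A adj_clr_w by blast

lemma Aset_eq:
  assumes "a < w" "w \<notin> set zs" "card {v \<in> set zs. adj G w v} < r"
  shows "AS G zs = AS (clr w G) zs"
proof -
  have eqc: "{v \<in> set zs. adj G x v} = {v \<in> set zs. adj (clr w G) x v}" if "x \<noteq> w" for x
    using assms(2) that by (intro Collect_cong) (metis adj_clr)
  have c0: "{v \<in> set zs. adj (clr w G) w v} = {}" using adj_clr_w by auto
  show ?thesis unfolding Aset_def
  proof (intro arg_cong2[where f="(\<union>)"] refl Collect_cong iffI, goal_cases)
    case (1 x)
    then obtain i where i: "x = a + i" "i \<in> {1..n-a}" "r \<le> card {v \<in> set zs. adj G (a + i) v}" by blast
    have "a + i \<noteq> w" using i assms(3) by auto
    thus ?case using i eqc by metis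
  next
    case (2 x)
    then obtain i where i: "x = a + i" "i \<in> {1..n-a}" "r \<le> card {v \<in> set zs. adj (clr w G) (a + i) v}" by blast
    have "a + i \<noteq> w"
    proof
      assume "a + i = w"
      hence "card {v \<in> set zs. adj (clr w G) (a + i) v} = 0" using c0 by simp
      thus False using i(3) r_pos by linarith
    qed
    thus ?case using i eqc by metis
  qed
qed

lemma DD:
  assumes w: "a < w"
    and hyp: "\<And>s. s < \<tau> \<Longrightarrow> Z G s = Z (clr w G) s \<Longrightarrow> card {v \<in> set (Z G s). adj G w v} < r"
  shows "s \<le> \<tau> \<Longrightarrow> Z G s = Z (clr w G) s"
proof (induction s)
  case 0 then show ?case by simp
next
  case (Suc s)
  then have eq: "Z G s = Z (clr w G) s" by simp
  have "w \<notin> set (Z G s)" using eq w_notin_Z_clr[OF w] by simp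
  moreover have "card {v \<in> set (Z G s). adj G w v} < r" using hyp Suc eq by simp
  ultimately have "AS G (Z G s) = AS (clr w G) (Z G s)" using Aset_eq[OF w] by blast
  then show ?case using eq by (simp add: zseq_step)
qed

lemma Xind_clr:
  assumes "a < w" "a + j \<noteq> w" "Z G s = Z (clr w G) s"
  shows "Xind n a r sel G s j = Xind n a r sel (clr w G) s j"
proof -
  have "w \<notin> set (Z G s)" using assms w_notin_Z_clr by simp
  hence "{v \<in> set (Z G s). adj G (a + j) v} = {v \<in> set (Z G s). adj (clr w G) (a + j) v}"
    using \<open>w \<notin> set (Z G s)\<close> assms(2) by (intro Collect_cong) (metis adj_clr)
  thus ?thesis unfolding Xind_def Zset_def using assms(3) by simp
qed

lemma Xind_clr_w: "a + i = w \<Longrightarrow> Xind n a r sel (clr w G) s i = 0"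
  unfolding Xind_def using adj_clr_w r_pos by simp

end


lemma pihat_Pi:
  assumes p: "0 \<le> p" "p \<le> 1" and fin: "finite A'" and sub: "A \<subseteq> A'"
  shows "measure_pmf.prob (Pi_pmf A' False (\<lambda>_. bernoulli_pmf p)) {f. r \<le> card {x\<in>A. f x}} = pihat p r (card A)"
proof -
  have finA: "finite A" using fin sub finite_subset by blast
  have "pihat p r (card A) = measure_pmf.prob (map_pmf (\<lambda>f. card {x\<in>A. f x}) (Pi_pmf A False (\<lambda>_. bernoulli_pmf p))) {k. r \<le> k}"
    unfolding pihat_def using p by (subst binomial_pmf_altdef'[OF finA refl]) auto
  also have "\<dots> = measure_pmf.prob (Pi_pmf A False (\<lambda>_. bernoulli_pmf p)) {f. r \<le> card {x\<in>A. f x}}"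
    by (simp add: vimage_def)
  also have "Pi_pmf A False (\<lambda>_. bernoulli_pmf p) = map_pmf (\<lambda>f x. if x \<in> A then f x else False) (Pi_pmf A' False (\<lambda>_. bernoulli_pmf p))"
    by (rule Pi_pmf_subset[OF fin sub])
  also have "measure_pmf.prob \<dots> {f. r \<le> card {x\<in>A. f x}} = measure_pmf.prob (Pi_pmf A' False (\<lambda>_. bernoulli_pmf p)) {f. r \<le> card {x\<in>A. f x}}"
  proof -
    have "(\<lambda>f x. if x \<in> A then f x else False) -` {f. r \<le> card {x\<in>A. f x}} = {f. r \<le> card {x\<in>A. f x}}"
    proof (intro set_eqI)
      fix f :: "'a \<Rightarrow> bool"
      have "{x\<in>A. (if x \<in> A then f x else False)} = {x\<in>A. f x}" by auto
      thus "f \<in> (\<lambda>f x. if x \<in> A then f x else False) -` {f. r \<le> card {x\<in>A. f x}} \<longleftrightarrow> f \<in> {f. r \<le> card {x\<in>A. f x}}"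
        by (simp only: vimage_def mem_Collect_eq)
    qed
    thus ?thesis by (simp only: measure_map_pmf)
  qed
  finally show ?thesis ..
qed

lemma pihat_mono:
  assumes p: "0 \<le> p" "p \<le> 1" and "m \<le> m'"
  shows "pihat p r m \<le> pihat p r m'"
proof -
  let ?P = "Pi_pmf {0..<m'} False (\<lambda>_. bernoulli_pmf p)"
  have "pihat p r m = measure_pmf.prob ?P {f. r \<le> card {x\<in>{0..<m}. f x}}"
    using pihat_Pi[OF p, of "{0..<m'}" "{0..<m}" r] assms by simp
  also have "\<dots> \<le> measure_pmf.prob ?P {f. r \<le> card {x\<in>{0..<m'}. f x}}"
  proof (rule measure_pmf.finite_measure_mono)
    show "{f. r \<le> card {x \<in> {0..<m}. f x}} \<subseteq> {f. r \<le> card {x \<in> {0..<m'}. f x}}"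
    proof
      fix f assume "f \<in> {f. r \<le> card {x \<in> {0..<m}. f x}}"
      moreover have "card {x \<in> {0..<m}. f x} \<le> card {x \<in> {0..<m'}. f x}"
        using assms by (intro card_mono) auto
      ultimately show "f \<in> {f. r \<le> card {x \<in> {0..<m'}. f x}}" by simp
    qed
  qed simp
  also have "\<dots> = pihat p r m'"
    using pihat_Pi[OF p, of "{0..<m'}" "{0..<m'}" r] by simp
  finally show ?thesis .
qed

lemma pihat_0: "0 \<le> p \<Longrightarrow> p \<le> 1 \<Longrightarrow> 1 \<le> r \<Longrightarrow> pihat p r 0 = 0"
  unfolding pihat_def by (simp add: binomial_pmf_0)

lemma pihat_nonneg: "0 \<le> pihat p r m"
  unfolding pihat_def by simp

lemma pihat_lt1:
  assumes p: "0 \<le> p" "p < 1" and r: "1 \<le> r"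
  shows "pihat p r m < 1"
proof -
  let ?B = "binomial_pmf m p"
  have "measure_pmf.prob ?B {k. r \<le> k} + measure_pmf.prob ?B {0} = measure_pmf.prob ?B ({k. r \<le> k} \<union> {0})"
    using r by (subst measure_pmf.finite_measure_Union) auto
  also have "\<dots> \<le> 1" by simp
  finally have "pihat p r m \<le> 1 - pmf ?B 0" unfolding pihat_def by (simp add: measure_pmf_single)
  moreover have "pmf ?B 0 = (1 - p) ^ m" using p by simp
  moreover have "(1 - p) ^ m > 0" using p by simp
  ultimately show ?thesis by linarith
qed

lemma prob_split:
  fixes PR :: "'a pmf" and PW :: "'b pmf" and mrg :: "'a \<times> 'b \<Rightarrow> 'c"
  assumes "\<And>H K. H \<in> set_pmf PR \<Longrightarrow> K \<in> set_pmf PW \<Longrightarrow> (mrg (H, K) \<in> E \<longleftrightarrow> H \<in> B \<and> K \<in> C)"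
  shows "measure_pmf.prob (map_pmf mrg (pair_pmf PR PW)) E = measure_pmf.prob PR B * measure_pmf.prob PW C"
proof -
  have "measure_pmf.prob (map_pmf mrg (pair_pmf PR PW)) E = measure_pmf.prob (pair_pmf PR PW) (mrg -` E)"
    by simp
  also have "\<dots> = measure_pmf.prob (pair_pmf PR PW) (mrg -` E \<inter> set_pmf (pair_pmf PR PW))"
    by (rule measure_Int_set_pmf[symmetric])
  also have "mrg -` E \<inter> set_pmf (pair_pmf PR PW) = (B \<inter> set_pmf PR) \<times> (C \<inter> set_pmf PW)"
    using assms by auto
  also have "measure_pmf.prob (pair_pmf PR PW) \<dots> = measure_pmf.prob PR (B \<inter> set_pmf PR) * measure_pmf.prob PW (C \<inter> set_pmf PW)"
    by (rule measure_pmf_prob_product) (auto intro: countable_subset)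
  also have "\<dots> = measure_pmf.prob PR B * measure_pmf.prob PW C"
    by (simp add: measure_Int_set_pmf)
  finally show ?thesis .
qed

definition incid :: "nat \<Rightarrow> (nat \<times> nat) set" where
  "incid w = {e. fst e = w \<or> snd e = w}"

definition mrg :: "nat \<Rightarrow> nat \<Rightarrow> graph \<times> graph \<Rightarrow> graph" where
  "mrg n w = (\<lambda>(f,g) x. if x \<in> edge_slots n - incid w then f x else g x)"

lemma finite_edge_slots: "finite (edge_slots n)"
proof -
  have "edge_slots n \<subseteq> {1..n} \<times> {1..n}" unfolding edge_slots_def by auto
  thus ?thesis using finite_subset by blast
qed

lemma gnp_split:
  "gnp n p = map_pmf (mrg n w) (pair_pmf (Pi_pmf (edge_slots n - incid w) False (\<lambda>_. bernoulli_pmf p))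
                                         (Pi_pmf (edge_slots n \<inter> incid w) False (\<lambda>_. bernoulli_pmf p)))"
proof -
  have "edge_slots n = (edge_slots n - incid w) \<union> (edge_slots n \<inter> incid w)" by auto
  hence "gnp n p = Pi_pmf ((edge_slots n - incid w) \<union> (edge_slots n \<inter> incid w)) False (\<lambda>_. bernoulli_pmf p)"
    unfolding gnp_def by simp
  also have "\<dots> = map_pmf (mrg n w) (pair_pmf (Pi_pmf (edge_slots n - incid w) False (\<lambda>_. bernoulli_pmf p))
                                         (Pi_pmf (edge_slots n \<inter> incid w) False (\<lambda>_. bernoulli_pmf p)))"
    unfolding mrg_def by (rule Pi_pmf_union) (use finite_edge_slots in auto)
  finally show ?thesis .
qed

lemma PW_count:
  assumes p: "0 \<le> p" "p \<le> 1" and w: "w \<in> {1..n}" and S: "S \<subseteq> {1..n}" "w \<notin> S"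
  shows "measure_pmf.prob (Pi_pmf (edge_slots n \<inter> incid w) False (\<lambda>_. bernoulli_pmf p))
           {K. r \<le> card {v\<in>S. adj K w v}} = pihat p r (card S)"
proof -
  define sl where "sl v = (min w v, max w v)" for v
  have inj: "inj_on sl S" unfolding sl_def inj_on_def using S by (auto simp: min_def max_def split: if_splits)
  have sub: "sl ` S \<subseteq> edge_slots n \<inter> incid w"
  proof -
    have ne: "\<And>x. x \<in> S \<Longrightarrow> x \<noteq> w" using S by auto
    show ?thesis using S w ne unfolding sl_def edge_slots_def incid_def by (force simp: min_def max_def)
  qed
  have adjsl: "adj K w v = K (sl v)" if "v \<in> S" for K v
    using that S unfolding adj_def sl_def by (auto simp: min_def max_def)
  have cnt: "card {v\<in>S. adj K w v} = card {e\<in>sl ` S. K e}" for K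
  proof -
    have "{e\<in>sl ` S. K e} = sl ` {v\<in>S. adj K w v}" using adjsl by auto
    moreover have "inj_on sl {v\<in>S. adj K w v}" using inj by (rule inj_on_subset) auto
    ultimately show ?thesis by (simp add: card_image)
  qed
  have "measure_pmf.prob (Pi_pmf (edge_slots n \<inter> incid w) False (\<lambda>_. bernoulli_pmf p))
           {K. r \<le> card {v\<in>S. adj K w v}} = measure_pmf.prob (Pi_pmf (edge_slots n \<inter> incid w) False (\<lambda>_. bernoulli_pmf p))
           {K. r \<le> card {e\<in>sl ` S. K e}}" by (simp add: cnt)
  also have "\<dots> = pihat p r (card (sl ` S))"
    by (rule pihat_Pi[OF p _ sub]) (use finite_edge_slots in auto)
  also have "card (sl ` S) = card S" by (rule card_image[OF inj])
  finally show ?thesis .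
qed


definition Psi :: "nat \<Rightarrow> nat \<Rightarrow> nat \<Rightarrow> (nat list \<Rightarrow> nat set \<Rightarrow> nat) \<Rightarrow> graph \<Rightarrow> nat \<Rightarrow> nat
    \<Rightarrow> (nat \<Rightarrow> nat list) \<times> (nat \<Rightarrow> nat \<Rightarrow> real)" where
  "Psi n a r sel G \<tau> i = ((\<lambda>s. if s \<le> \<tau> then zseq n a r sel G s else []),
      (\<lambda>s j. if s < \<tau> \<or> (s = \<tau> \<and> j < i) then Xind n a r sel G s j else 0))"

context proc
begin

abbreviation Ps where "Ps G \<tau> i \<equiv> Psi n a r sel G \<tau> i"
abbreviation X where "X G s j \<equiv> Xind n a r sel G s j"

lemma Ps_eqD:
  assumes "Ps G \<tau> i = Ps G' \<tau> i"
  shows "\<And>s. s \<le> \<tau> \<Longrightarrow> Z G s = Z G' s"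
    and "\<And>s j. s < \<tau> \<or> (s = \<tau> \<and> j < i) \<Longrightarrow> X G s j = X G' s j"
proof -
  fix s assume "s \<le> \<tau>"
  then show "Z G s = Z G' s" using fun_cong[OF arg_cong[where f=fst, OF assms], of s] by (simp add: Psi_def)
next
  fix s j assume c: "s < \<tau> \<or> (s = \<tau> \<and> j < i)"
  have "snd (Ps G \<tau> i) s j = snd (Ps G' \<tau> i) s j" using assms by simp
  then show "X G s j = X G' s j" using c by (simp add: Psi_def)
qed

lemma Xind_alt: "X G s j = of_bool (r \<le> card {v \<in> set (Z G s). adj G (a + j) v})"
  unfolding Xind_def Zset_def ..

lemma Psi_clr:
  assumes w: "a < w" "a + i = w" and zeq: "\<And>s. s \<le> \<tau> \<Longrightarrow> Z G s = Z (clr w G) s"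
    and x0: "\<And>s. s < \<tau> \<Longrightarrow> X G s i = 0"
  shows "Ps G \<tau> i = Ps (clr w G) \<tau> i"
  unfolding Psi_def
proof (intro arg_cong2[where f=Pair] ext)
  fix s show "(if s \<le> \<tau> then Z G s else []) = (if s \<le> \<tau> then Z (clr w G) s else [])" using zeq by simp
next
  fix s j
  show "(if s < \<tau> \<or> s = \<tau> \<and> j < i then X G s j else 0) = (if s < \<tau> \<or> s = \<tau> \<and> j < i then X (clr w G) s j else 0)"
  proof (cases "s < \<tau> \<or> s = \<tau> \<and> j < i")
    case True
    show ?thesis
    proof (cases "j = i")
      case True
      then have "s < \<tau>" using \<open>s < \<tau> \<or> s = \<tau> \<and> j < i\<close> by auto
      then show ?thesis using x0 Xind_clr_w[OF w(2)] True by simp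
    next
      case False
      then have "a + j \<noteq> w" using w by auto
      then show ?thesis using Xind_clr[OF w(1) _ zeq] True by auto
    qed
  next
    case False
    show ?thesis by (simp only: if_not_P[OF False])
  qed
qed

lemma Zeq_X0:
  assumes w: "a < w" "a + i = w" and tau: "1 \<le> \<tau>" and x0: "X G (\<tau> - 1) i = 0"
  shows "\<And>s. s \<le> \<tau> \<Longrightarrow> Z G s = Z (clr w G) s"
    and "\<And>s. s < \<tau> \<Longrightarrow> X G s i = 0"
proof -
  have c: "card {v \<in> set (Z G (\<tau> - 1)). adj G w v} < r"
    using x0 w unfolding Xind_alt by (auto simp: not_le)
  have hyp: "card {v \<in> set (Z G s). adj G w v} < r" if "s < \<tau>" for s
  proof -
    have "card {v \<in> set (Z G s). adj G w v} \<le> card {v \<in> set (Z G (\<tau> - 1)). adj G w v}"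
    proof (rule card_mono)
      show "finite {v \<in> set (Z G (\<tau> - 1)). adj G w v}" by simp
      have "s \<le> \<tau> - 1" using that by simp
      from Z_mono[OF this, of G] show "{v \<in> set (Z G s). adj G w v} \<subseteq> {v \<in> set (Z G (\<tau> - 1)). adj G w v}" by blast
    qed
    thus ?thesis using c by linarith
  qed
  show "\<And>s. s \<le> \<tau> \<Longrightarrow> Z G s = Z (clr w G) s"
    using DD[OF w(1)] hyp by blast
  show "X G s i = 0" if "s < \<tau>" for s
    using hyp[OF that] w unfolding Xind_alt by simp
qed

lemma PW1:
  assumes w: "a < w" "a + i = w" and tau: "1 \<le> \<tau>" and x0: "X G0 (\<tau> - 1) i = 0"
  shows "Ps G \<tau> i = Ps G0 \<tau> i \<longleftrightarrow>
           Ps (clr w G) \<tau> i = Ps G0 \<tau> i \<and> card {v \<in> set (Z G0 (\<tau> - 1)). adj G w v} < r"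
proof
  assume eq: "Ps G \<tau> i = Ps G0 \<tau> i"
  have xg: "X G (\<tau> - 1) i = 0" using Ps_eqD(2)[OF eq, of "\<tau> - 1" i] x0 tau by simp
  have zg: "Z G (\<tau> - 1) = Z G0 (\<tau> - 1)" using Ps_eqD(1)[OF eq] by simp
  have "Ps (clr w G) \<tau> i = Ps G \<tau> i"
    using Psi_clr[OF w Zeq_X0(1)[OF w tau xg] Zeq_X0(2)[OF w tau xg]] by simp
  moreover have "card {v \<in> set (Z G0 (\<tau> - 1)). adj G w v} < r"
    using xg zg w unfolding Xind_alt by (simp add: not_le)
  ultimately show "Ps (clr w G) \<tau> i = Ps G0 \<tau> i \<and> card {v \<in> set (Z G0 (\<tau> - 1)). adj G w v} < r"
    using eq by simp
next
  assume h: "Ps (clr w G) \<tau> i = Ps G0 \<tau> i \<and> card {v \<in> set (Z G0 (\<tau> - 1)). adj G w v} < r"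
  have zc: "Z (clr w G) s = Z G0 s" if "s \<le> \<tau>" for s using Ps_eqD(1)[OF h[THEN conjunct1] that] .
  have cs: "card {v \<in> set (Z (clr w G) s). adj G w v} < r" if "s < \<tau>" for s
  proof -
    have "card {v \<in> set (Z (clr w G) s). adj G w v} \<le> card {v \<in> set (Z (clr w G) (\<tau> - 1)). adj G w v}"
    proof (rule card_mono)
      show "finite {v \<in> set (Z (clr w G) (\<tau> - 1)). adj G w v}" by simp
      have "s \<le> \<tau> - 1" using that by simp
      from Z_mono[OF this, of "clr w G"] show "{v \<in> set (Z (clr w G) s). adj G w v} \<subseteq> {v \<in> set (Z (clr w G) (\<tau> - 1)). adj G w v}" by blast
    qed
    thus ?thesis using h zc[of "\<tau> - 1"] by simp
  qed
  have zeq: "Z G s = Z (clr w G) s" if "s \<le> \<tau>" for s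
    using DD[OF w(1), of \<tau> G s] cs that by auto
  have x0': "X G s i = 0" if "s < \<tau>" for s
    using cs[OF that] zeq[of s] that w unfolding Xind_alt by simp
  show "Ps G \<tau> i = Ps G0 \<tau> i" using Psi_clr[OF w zeq x0'] h by simp
qed

lemma PW2:
  assumes "Ps G \<tau> i = Ps G0 \<tau> i"
  shows "X G \<tau> i = of_bool (r \<le> card {v \<in> set (Z G0 \<tau>). adj G (a + i) v})"
  using Ps_eqD(1)[OF assms, of \<tau>] unfolding Xind_alt by simp

lemma finite_gnp: "finite (set_pmf (gnp n p))"
proof -
  have "set_pmf (gnp n p) = PiE_dflt (edge_slots n) False (set_pmf \<circ> (\<lambda>_. bernoulli_pmf p))"
    unfolding gnp_def by (rule set_Pi_pmf[OF finite_edge_slots])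
  thus ?thesis using finite_edge_slots by auto
qed

lemma sum_pmf_eq: "(\<Sum>G\<in>{G\<in>set_pmf (gnp n p). P G}. pmf (gnp n p) G) = measure_pmf.prob (gnp n p) {G. P G}"
proof -
  have e: "{G\<in>set_pmf (gnp n p). P G} = {G. P G} \<inter> set_pmf (gnp n p)" by auto
  have "(\<Sum>G\<in>{G\<in>set_pmf (gnp n p). P G}. pmf (gnp n p) G) = measure_pmf.prob (gnp n p) {G\<in>set_pmf (gnp n p). P G}"
    using finite_gnp by (simp add: measure_measure_pmf_finite)
  also have "\<dots> = measure_pmf.prob (gnp n p) {G. P G}" unfolding e by (rule measure_Int_set_pmf)
  finally show ?thesis .
qed

lemma clr_mrg:
  assumes H: "H \<in> set_pmf (Pi_pmf (edge_slots n - incid w) False (\<lambda>_. bernoulli_pmf p))"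
    and K: "K \<in> set_pmf (Pi_pmf (edge_slots n \<inter> incid w) False (\<lambda>_. bernoulli_pmf p))"
  shows "clr w (mrg n w (H, K)) = H" and "\<And>v. adj (mrg n w (H, K)) w v = adj K w v"
proof -
  have H0: "H x = False" if "x \<notin> edge_slots n - incid w" for x
  proof -
    have f: "finite (edge_slots n - incid w)" using finite_edge_slots by simp
    have "H \<in> {f. \<forall>x. x \<notin> edge_slots n - incid w \<longrightarrow> f x = False}"
      by (rule subsetD[OF set_Pi_pmf_subset[OF f] H])
    hence "\<forall>x. x \<notin> edge_slots n - incid w \<longrightarrow> H x = False" by (simp only: mem_Collect_eq)
    thus ?thesis using that by blast
  qed
  have K0: "K x = False" if "x \<notin> edge_slots n \<inter> incid w" for x
  proof -
    have f: "finite (edge_slots n \<inter> incid w)" using finite_edge_slots by simp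
    have "K \<in> {f. \<forall>x. x \<notin> edge_slots n \<inter> incid w \<longrightarrow> f x = False}"
      by (rule subsetD[OF set_Pi_pmf_subset[OF f] K])
    hence "\<forall>x. x \<notin> edge_slots n \<inter> incid w \<longrightarrow> K x = False" by (simp only: mem_Collect_eq)
    thus ?thesis using that by blast
  qed
  show "clr w (mrg n w (H, K)) = H"
    unfolding clr_def mrg_def using H0 K0 by (auto simp: incid_def fun_eq_iff)
  show "adj (mrg n w (H, K)) w v = adj K w v" for v
    unfolding adj_def mrg_def by (auto simp: incid_def)
qed

lemma key:
  assumes p: "0 < p" "p < 1" and tau: "1 \<le> \<tau>" and i: "i \<in> {1..n-a}"
    and x0: "X G0 (\<tau> - 1) i = 0"
  defines "\<beta> \<equiv> measure_pmf.prob (Pi_pmf (edge_slots n - incid (a+i)) False (\<lambda>_. bernoulli_pmf p)) {H. Ps H \<tau> i = Ps G0 \<tau> i}"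
  shows "(\<Sum>G\<in>{G\<in>set_pmf (gnp n p). Ps G \<tau> i = Ps G0 \<tau> i}. pmf (gnp n p) G)
           = \<beta> * (1 - pihat p r (length (Z G0 (\<tau> - 1))))"
    and "(\<Sum>G\<in>{G\<in>set_pmf (gnp n p). Ps G \<tau> i = Ps G0 \<tau> i \<and> X G \<tau> i = 1}. pmf (gnp n p) G)
           = \<beta> * (pihat p r (length (Z G0 \<tau>)) - pihat p r (length (Z G0 (\<tau> - 1))))"
proof -
  define w where "w = a + i"
  have w: "a < w" "a + i = w" using i by (auto simp: w_def)
  have wn: "w \<in> {1..n}" using i a_le by (auto simp: w_def)
  define S1 where "S1 = set (Z G0 (\<tau> - 1))"
  define S2 where "S2 = set (Z G0 \<tau>)"
  have S12: "S1 \<subseteq> S2" unfolding S1_def S2_def by (rule Z_mono) simp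
  have S2r: "S2 \<subseteq> {1..n}" unfolding S2_def by (rule Z_range)
  have wS2: "w \<notin> S2" unfolding S2_def using Zeq_X0(1)[OF w tau x0, of \<tau>] w_notin_Z_clr[OF w(1)] by simp
  have cS1: "card S1 = length (Z G0 (\<tau> - 1))" unfolding S1_def by (rule distinct_card[OF Z_distinct])
  have cS2: "card S2 = length (Z G0 \<tau>)" unfolding S2_def by (rule distinct_card[OF Z_distinct])
  let ?PR = "Pi_pmf (edge_slots n - incid w) False (\<lambda>_. bernoulli_pmf p)"
  let ?PW = "Pi_pmf (edge_slots n \<inter> incid w) False (\<lambda>_. bernoulli_pmf p)"
  let ?B = "{H. Ps H \<tau> i = Ps G0 \<tau> i}"
  have pp: "0 \<le> p" "p \<le> 1" using p by auto
  have PWc: "measure_pmf.prob ?PW {K. r \<le> card {v\<in>S. adj K w v}} = pihat p r (card S)" if "S \<subseteq> S2" for S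
    by (rule PW_count[OF pp wn]) (use that S2r wS2 in auto)
  have mm: "mrg n w (H, K) \<in> {G. Ps G \<tau> i = Ps G0 \<tau> i} \<longleftrightarrow> H \<in> ?B \<and> K \<in> {K. card {v\<in>S1. adj K w v} < r}"
    if "H \<in> set_pmf ?PR" "K \<in> set_pmf ?PW" for H K
    using PW1[OF w tau x0, of "mrg n w (H, K)"] clr_mrg[OF that] unfolding S1_def by simp
  have "(\<Sum>G\<in>{G\<in>set_pmf (gnp n p). Ps G \<tau> i = Ps G0 \<tau> i}. pmf (gnp n p) G)
        = measure_pmf.prob (gnp n p) {G. Ps G \<tau> i = Ps G0 \<tau> i}" by (rule sum_pmf_eq)
  also have "\<dots> = measure_pmf.prob ?PR ?B * measure_pmf.prob ?PW {K. card {v\<in>S1. adj K w v} < r}"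
    unfolding gnp_split[of n p w] by (rule prob_split) (rule mm)
  also have "measure_pmf.prob ?PW {K. card {v\<in>S1. adj K w v} < r} = 1 - pihat p r (card S1)"
  proof -
    have "{K. card {v\<in>S1. adj K w v} < r} = space (measure_pmf ?PW) - {K. r \<le> card {v\<in>S1. adj K w v}}"
      by auto
    moreover have "measure_pmf.prob ?PW (space (measure_pmf ?PW) - {K. r \<le> card {v\<in>S1. adj K w v}})
       = 1 - measure_pmf.prob ?PW {K. r \<le> card {v\<in>S1. adj K w v}}"
      by (rule measure_pmf.prob_compl) simp
    ultimately show ?thesis using PWc[OF S12] by simp
  qed
  finally show "(\<Sum>G\<in>{G\<in>set_pmf (gnp n p). Ps G \<tau> i = Ps G0 \<tau> i}. pmf (gnp n p) G)
           = \<beta> * (1 - pihat p r (length (Z G0 (\<tau> - 1))))" unfolding \<beta>_def w_def cS1 by simp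
  have mm2: "mrg n w (H, K) \<in> {G. Ps G \<tau> i = Ps G0 \<tau> i \<and> X G \<tau> i = 1} \<longleftrightarrow>
        H \<in> ?B \<and> K \<in> {K. card {v\<in>S1. adj K w v} < r \<and> r \<le> card {v\<in>S2. adj K w v}}"
    if "H \<in> set_pmf ?PR" "K \<in> set_pmf ?PW" for H K
  proof -
    have "Ps (mrg n w (H, K)) \<tau> i = Ps G0 \<tau> i \<Longrightarrow> X (mrg n w (H, K)) \<tau> i = of_bool (r \<le> card {v\<in>S2. adj K w v})"
      using PW2[of "mrg n w (H, K)" \<tau> i G0] clr_mrg(2)[OF that] w unfolding S2_def by simp
    then show ?thesis using mm[OF that] by auto
  qed
  have "(\<Sum>G\<in>{G\<in>set_pmf (gnp n p). Ps G \<tau> i = Ps G0 \<tau> i \<and> X G \<tau> i = 1}. pmf (gnp n p) G)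
        = measure_pmf.prob (gnp n p) {G. Ps G \<tau> i = Ps G0 \<tau> i \<and> X G \<tau> i = 1}" by (rule sum_pmf_eq)
  also have "\<dots> = measure_pmf.prob ?PR ?B * measure_pmf.prob ?PW {K. card {v\<in>S1. adj K w v} < r \<and> r \<le> card {v\<in>S2. adj K w v}}"
    unfolding gnp_split[of n p w] by (rule prob_split) (rule mm2)
  also have "measure_pmf.prob ?PW {K. card {v\<in>S1. adj K w v} < r \<and> r \<le> card {v\<in>S2. adj K w v}}
           = pihat p r (card S2) - pihat p r (card S1)"
  proof -
    have sub: "{K. r \<le> card {v\<in>S1. adj K w v}} \<subseteq> {K. r \<le> card {v\<in>S2. adj K w v}}"
    proof
      fix K assume "K \<in> {K. r \<le> card {v\<in>S1. adj K w v}}"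
      moreover have "card {v\<in>S1. adj K w v} \<le> card {v\<in>S2. adj K w v}"
        using S12 S2r by (intro card_mono) (auto intro: finite_subset)
      ultimately show "K \<in> {K. r \<le> card {v\<in>S2. adj K w v}}" by simp
    qed
    have "{K. card {v\<in>S1. adj K w v} < r \<and> r \<le> card {v\<in>S2. adj K w v}}
          = {K. r \<le> card {v\<in>S2. adj K w v}} - {K. r \<le> card {v\<in>S1. adj K w v}}" by auto
    thus ?thesis using PWc[OF S12] PWc[OF order.refl]
      by (simp add: measure_pmf.finite_measure_Diff[OF _ _ sub])
  qed
  finally show "(\<Sum>G\<in>{G\<in>set_pmf (gnp n p). Ps G \<tau> i = Ps G0 \<tau> i \<and> X G \<tau> i = 1}. pmf (gnp n p) G)
           = \<beta> * (pihat p r (length (Z G0 \<tau>)) - pihat p r (length (Z G0 (\<tau> - 1))))"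
    unfolding \<beta>_def w_def cS1 cS2 by simp
qed

end


lemma mean_alg:
  fixes \<beta> c1 c2 :: real
  assumes "c1 < 1" "c2 < 1"
  shows "\<beta>*(c2-c1)*(1/(1-c2)) + \<beta>*(1-c1)*(c1/(1-c1) - c2/(1-c2)) = 0"
proof -
  have n: "1 - c1 \<noteq> 0" "1 - c2 \<noteq> 0" using assms by auto
  have "c1/(1-c1) - c2/(1-c2) = (c1*(1-c2) - c2*(1-c1))/((1-c1)*(1-c2))"
    using n by (rule diff_frac_eq)
  also have "c1*(1-c2) - c2*(1-c1) = c1 - c2" by (simp add: algebra_simps)
  finally have e: "(1-c1)*(c1/(1-c1) - c2/(1-c2)) = (c1 - c2)/(1-c2)" using n by simp
  have "\<beta>*(1-c1)*(c1/(1-c1) - c2/(1-c2)) = \<beta>*((c1 - c2)/(1-c2))" by (simp only: mult.assoc e)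
  moreover have "\<beta>*(c2-c1)*(1/(1-c2)) = \<beta>*((c2 - c1)/(1-c2))" by simp
  moreover have "\<beta>*((c2 - c1)/(1-c2)) + \<beta>*((c1 - c2)/(1-c2)) = \<beta>*(((c2 - c1) + (c1 - c2))/(1-c2))"
    by (simp only: add_divide_distrib distrib_left)
  ultimately show ?thesis by simp
qed

lemma E_alg0:
  fixes A \<beta> q u :: real
  shows "\<beta>*(A*q)*(u\<^sup>2 + 2*u*(- q * u)) + \<beta>*A*(- q * u)\<^sup>2 = \<beta> * (A*q) * u\<^sup>2 * (1 - q)"
  by (simp add: algebra_simps power2_eq_square)

lemma E_alg:
  fixes A \<beta> \<delta> u :: real assumes "A \<noteq> 0"
  shows "\<beta>*\<delta>*(u\<^sup>2 + 2*u*(- \<delta> * u / A)) + \<beta>*A*(- \<delta> * u / A)\<^sup>2 = \<beta> * \<delta> * u\<^sup>2 * (1 - \<delta>/A)"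
proof -
  define q where "q = \<delta> / A"
  have d: "\<delta> = A * q" using assms by (simp add: q_def)
  have e: "- \<delta> * u / A = - q * u" by (simp add: q_def)
  have "\<beta>*(A*q)*(u\<^sup>2 + 2*u*(- q * u)) + \<beta>*A*(- q * u)\<^sup>2 = \<beta> * (A*q) * u\<^sup>2 * (1 - q)"
    by (rule E_alg0)
  hence "\<beta>*\<delta>*(u\<^sup>2 + 2*u*(- q * u)) + \<beta>*A*(- q * u)\<^sup>2 = \<beta> * \<delta> * u\<^sup>2 * (1 - q)"
    by (simp only: d[symmetric])
  thus ?thesis unfolding e q_def .
qed

lemma var_alg:
  fixes \<beta> c1 c2 ct :: real
  assumes b: "0 \<le> \<beta>" and c: "0 \<le> c1" "c1 \<le> c2" "c2 \<le> ct" "ct < 1"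
  shows "\<beta>*(c2-c1)*((1/(1-c2))\<^sup>2 + 2*(1/(1-c2))*(c1/(1-c1) - c2/(1-c2))) + \<beta>*(1-c1)*(c1/(1-c1) - c2/(1-c2))\<^sup>2
         \<le> (c2-c1)/(1-ct)^3 * (\<beta>*(1-c1))"
proof -
  define u where "u = 1/(1-c2)"
  define \<delta> where "\<delta> = c2 - c1"
  have pos: "0 < 1 - c1" "0 < 1 - c2" "0 < 1 - ct" using c by auto
  have n: "1 - c1 \<noteq> 0" "1 - c2 \<noteq> 0" using pos by auto
  have d0: "c1/(1-c1) - c2/(1-c2) = - \<delta> * u / (1 - c1)"
  proof -
    have "c1/(1-c1) - c2/(1-c2) = (c1*(1-c2) - c2*(1-c1))/((1-c1)*(1-c2))"
      using n by (rule diff_frac_eq)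
    also have "c1*(1-c2) - c2*(1-c1) = - \<delta>" by (simp add: \<delta>_def algebra_simps)
    also have "- \<delta> / ((1-c1)*(1-c2)) = - \<delta> * u / (1 - c1)" by (simp add: u_def)
    finally show ?thesis .
  qed
  have E: "\<beta>*(c2-c1)*(u\<^sup>2 + 2*u*(c1/(1-c1) - c2/(1-c2))) + \<beta>*(1-c1)*(c1/(1-c1) - c2/(1-c2))\<^sup>2
        = \<beta> * \<delta> * u\<^sup>2 * (1 - \<delta>/(1-c1))"
    unfolding d0 using E_alg[OF n(1), of \<beta> \<delta> u] by (simp add: \<delta>_def)
  have dpos: "0 \<le> \<delta>" using c by (simp add: \<delta>_def)
  have "\<delta>/(1-c1) \<ge> 0" using dpos pos by simp
  hence "\<beta> * \<delta> * u\<^sup>2 * (1 - \<delta>/(1-c1)) \<le> \<beta> * \<delta> * u\<^sup>2"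
    using b dpos by (simp add: mult_left_le)
  also have "\<dots> \<le> (c2-c1)/(1-ct)^3 * (\<beta>*(1-c1))"
  proof -
    have h1: "(1-ct)^3 \<le> (1-c1)*(1-c2)\<^sup>2"
    proof -
      have "(1-ct)^3 = (1-ct)*(1-ct)\<^sup>2" by (simp add: power2_eq_square power3_eq_cube)
      also have "\<dots> \<le> (1-c1)*(1-c2)\<^sup>2"
        using pos c by (intro mult_mono power_mono) auto
      finally show ?thesis .
    qed
    have "u\<^sup>2 = (1-c1)/((1-c1)*(1-c2)\<^sup>2)" using pos by (simp add: u_def field_simps)
    also have "\<dots> \<le> (1-c1)/(1-ct)^3"
      using pos h1 by (intro frac_le) auto
    finally have "u\<^sup>2 \<le> (1-c1)/(1-ct)^3" .
    hence "\<beta> * \<delta> * u\<^sup>2 \<le> \<beta> * \<delta> * ((1-c1)/(1-ct)^3)"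
      using b dpos by (intro mult_left_mono) auto
    thus ?thesis by (simp add: \<delta>_def field_simps)
  qed
  finally show ?thesis using E unfolding u_def by simp
qed

lemma inv_le_cube:
  fixes x ct :: real assumes "0 \<le> x" "x \<le> ct" "ct < 1"
  shows "1/(1-x) \<le> 1/(1-ct)^3"
proof -
  have "1/(1-x) \<le> 1/(1-ct)" using assms by (intro divide_left_mono) auto
  also have "\<dots> \<le> 1/(1-ct)^3"
  proof -
    have "(1-ct)^3 \<le> (1-ct)^1" using assms by (intro power_decreasing) auto
    hence "(1-ct)^3 \<le> 1 - ct" by simp
    moreover have "0 < (1-ct)^3" using assms by simp
    ultimately show ?thesis using assms by (intro divide_left_mono) auto
  qed
  finally show ?thesis .
qed

lemma bnd_alg:
  fixes x1 x2 c1 c2 ct :: real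
  assumes x: "x1 = 0 \<or> x1 = 1" "x2 = 0 \<or> x2 = 1" "x1 \<le> x2"
    and c: "0 \<le> c1" "c1 \<le> ct" "0 \<le> c2" "c2 \<le> ct" "ct < 1"
  shows "(x2-c2)/(1-c2) - (x1-c1)/(1-c1) \<le> 1/(1-ct)^3"
    and "- ((x2-c2)/(1-c2) - (x1-c1)/(1-c1)) \<le> 1/(1-ct)^3"
proof -
  have pos: "0 < 1 - c1" "0 < 1 - c2" "0 < 1 - ct" using c by auto
  have b1: "1/(1-c1) \<le> 1/(1-ct)^3" "1/(1-c2) \<le> 1/(1-ct)^3" using inv_le_cube c by auto
  have q1: "c1/(1-c1) \<le> 1/(1-c1)" "c2/(1-c2) \<le> 1/(1-c2)" using pos c by (auto intro: divide_right_mono)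
  have z1: "0 \<le> c1/(1-c1)" "0 \<le> c2/(1-c2)" using pos c by auto
  have p3: "0 < 1/(1-ct)^3" using pos by simp
  consider "x1 = 1" "x2 = 1" | "x1 = 0" "x2 = 0" | "x1 = 0" "x2 = 1" using x by auto
  then have "(x2-c2)/(1-c2) - (x1-c1)/(1-c1) \<le> 1/(1-ct)^3 \<and> - ((x2-c2)/(1-c2) - (x1-c1)/(1-c1)) \<le> 1/(1-ct)^3"
  proof cases
    case 1
    have e: "(x2-c2)/(1-c2) - (x1-c1)/(1-c1) = 0" using 1 pos by simp
    show ?thesis unfolding e using p3 by simp
  next
    case 2
    have e: "(x2-c2)/(1-c2) - (x1-c1)/(1-c1) = c1/(1-c1) - c2/(1-c2)"
      unfolding 2 by (simp only: diff_0 minus_divide_left, simp?)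
    show ?thesis unfolding e using q1 b1 z1 by linarith
  next
    case 3
    have e0: "(1-c2)/(1-c2) = 1" using pos by simp
    have e: "(x2-c2)/(1-c2) - (x1-c1)/(1-c1) = 1 + c1/(1-c1)"
      unfolding 3 e0 by (simp only: diff_0 minus_divide_left, simp?)
    have e2: "1 + c1/(1-c1) = 1/(1-c1)"
    proof -
      have "1 + c1/(1-c1) = (1-c1)/(1-c1) + c1/(1-c1)" using pos by simp
      also have "\<dots> = ((1-c1) + c1)/(1-c1)" by (simp only: add_divide_distrib)
      finally show ?thesis by simp
    qed
    have "0 \<le> 1/(1-c1)" using pos by simp
    then show ?thesis unfolding e e2 using b1 p3 by linarith
  qed
  then show "(x2-c2)/(1-c2) - (x1-c1)/(1-c1) \<le> 1/(1-ct)^3"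
    and "- ((x2-c2)/(1-c2) - (x1-c1)/(1-c1)) \<le> 1/(1-ct)^3" by auto
qed

definition Dr :: "nat \<Rightarrow> nat \<Rightarrow> nat \<Rightarrow> (nat list \<Rightarrow> nat set \<Rightarrow> nat) \<Rightarrow> real \<Rightarrow> graph \<Rightarrow> nat \<Rightarrow> nat \<Rightarrow> real" where
  "Dr n a r sel p G \<tau> i =
     (Xind n a r sel G \<tau> i - piproc n a r sel p G \<tau>) / (1 - piproc n a r sel p G \<tau>)
   - (Xind n a r sel G (\<tau> - 1) i - piproc n a r sel p G (\<tau> - 1)) / (1 - piproc n a r sel p G (\<tau> - 1))"

context proc
begin

lemma Dr_meas:
  assumes "Ps G \<tau> i = Ps G' \<tau> i" "1 \<le> s" "s < \<tau> \<or> (s = \<tau> \<and> j < i)"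
  shows "Dr n a r sel p G s j = Dr n a r sel p G' s j"
proof -
  have "s \<le> \<tau>" "s - 1 \<le> \<tau>" "s - 1 < \<tau>" using assms by auto
  note e = Ps_eqD[OF assms(1)]
  show ?thesis unfolding Dr_def piproc_len
    using e(1)[OF \<open>s \<le> \<tau>\<close>] e(1)[OF \<open>s - 1 \<le> \<tau>\<close>] e(2)[OF assms(3)] e(2)[of "s - 1" j] \<open>s - 1 < \<tau>\<close>
    by simp
qed

lemma len_mono: "s \<le> s' \<Longrightarrow> length (Z G s) \<le> length (Z G s')"
  unfolding len_min by simp

lemma Dr_bnd:
  assumes p: "0 < p" "p < 1" and tau: "1 \<le> \<tau>" "\<tau> \<le> t"
  shows "Dr n a r sel p G \<tau> i \<le> 1/(1 - pihat p r t)^3"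
    and "- Dr n a r sel p G \<tau> i \<le> 1/(1 - pihat p r t)^3"
proof -
  have pp: "0 \<le> p" "p \<le> 1" using p by auto
  have l1: "length (Z G (\<tau> - 1)) \<le> t" "length (Z G \<tau>) \<le> t"
    using len_le[of G "\<tau> - 1"] len_le[of G \<tau>] tau by auto
  have c: "0 \<le> pihat p r (length (Z G (\<tau> - 1)))" "pihat p r (length (Z G (\<tau> - 1))) \<le> pihat p r t"
    "0 \<le> pihat p r (length (Z G \<tau>))" "pihat p r (length (Z G \<tau>)) \<le> pihat p r t" "pihat p r t < 1"
    using pihat_nonneg pihat_mono[OF pp] l1 pihat_lt1[of p r t] p r_pos by auto
  have x: "X G (\<tau> - 1) i = 0 \<or> X G (\<tau> - 1) i = 1" "X G \<tau> i = 0 \<or> X G \<tau> i = 1" "X G (\<tau> - 1) i \<le> X G \<tau> i"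
    using Xind_01 Xind_mono[of "\<tau> - 1" \<tau>] by auto
  show "Dr n a r sel p G \<tau> i \<le> 1/(1 - pihat p r t)^3"
    and "- Dr n a r sel p G \<tau> i \<le> 1/(1 - pihat p r t)^3"
    unfolding Dr_def piproc_len using bnd_alg[OF x c] by auto
qed

end


context proc
begin

lemma sum_X_split:
  assumes fin: "finite F" and x01: "\<And>G. G \<in> F \<Longrightarrow> X G \<tau> i = 0 \<or> X G \<tau> i = 1"
  shows "(\<Sum>G\<in>F. f G * (X G \<tau> i * c + d)) = (\<Sum>G\<in>{G\<in>F. X G \<tau> i = 1}. f G) * c + (\<Sum>G\<in>F. f G) * d"
proof -
  have "(\<Sum>G\<in>F. f G * (X G \<tau> i * c + d)) = (\<Sum>G\<in>F. (if X G \<tau> i = 1 then f G else 0) * c + f G * d)"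
    using x01 by (intro sum.cong refl) (auto simp: algebra_simps)
  also have "\<dots> = (\<Sum>G\<in>F. (if X G \<tau> i = 1 then f G else 0)) * c + (\<Sum>G\<in>F. f G) * d"
    by (simp add: sum.distrib sum_distrib_right)
  also have "(\<Sum>G\<in>F. (if X G \<tau> i = 1 then f G else 0)) = (\<Sum>G\<in>{G\<in>F. X G \<tau> i = 1}. f G)"
    using fin by (simp add: sum.inter_filter)
  finally show ?thesis .
qed

lemma atom:
  assumes p: "0 < p" "p < 1" and tau: "1 \<le> \<tau>" "\<tau> \<le> t" and i: "i \<in> {1..n-a}"
  shows "(\<Sum>G\<in>{G\<in>set_pmf (gnp n p). Ps G \<tau> i = y}. pmf (gnp n p) G * Dr n a r sel p G \<tau> i) = 0"
    and "(\<Sum>G\<in>{G\<in>set_pmf (gnp n p). Ps G \<tau> i = y}. pmf (gnp n p) G * (Dr n a r sel p G \<tau> i)\<^sup>2)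
         \<le> (pihat p r \<tau> - pihat p r (\<tau> - 1)) / (1 - pihat p r t)^3 * (\<Sum>G\<in>{G\<in>set_pmf (gnp n p). Ps G \<tau> i = y}. pmf (gnp n p) G)"
proof -
  define F where "F = {G\<in>set_pmf (gnp n p). Ps G \<tau> i = y}"
  define vr where "vr = (pihat p r \<tau> - pihat p r (\<tau> - 1)) / (1 - pihat p r t)^3"
  let ?w = "pmf (gnp n p)"
  have pp: "0 \<le> p" "p \<le> 1" using p by auto
  have ct: "pihat p r t < 1" using pihat_lt1[of p r t] p r_pos by simp
  have vr0: "0 \<le> vr" unfolding vr_def using pihat_mono[OF pp, of "\<tau> - 1" \<tau> r] ct by simp
  have finF: "finite F" unfolding F_def using finite_gnp by simp
  have Pnn: "0 \<le> (\<Sum>G\<in>F. ?w G)" by (simp add: sum_nonneg)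
  have res: "(\<Sum>G\<in>F. ?w G * Dr n a r sel p G \<tau> i) = 0 \<and>
             (\<Sum>G\<in>F. ?w G * (Dr n a r sel p G \<tau> i)\<^sup>2) \<le> vr * (\<Sum>G\<in>F. ?w G)"
  proof (cases "F = {}")
    case True then show ?thesis by simp
  next
    case False
    then obtain G0 where G0: "G0 \<in> F" by blast
    have Fdef: "F = {G\<in>set_pmf (gnp n p). Ps G \<tau> i = Ps G0 \<tau> i}" using G0 unfolding F_def by auto
    define c1 where "c1 = pihat p r (length (Z G0 (\<tau> - 1)))"
    define c2 where "c2 = pihat p r (length (Z G0 \<tau>))"
    have l1: "length (Z G0 (\<tau> - 1)) \<le> length (Z G0 \<tau>)" "length (Z G0 \<tau>) \<le> t"
      using len_mono[of "\<tau> - 1" \<tau> G0] len_le[of G0 \<tau>] tau by auto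
    have c: "0 \<le> c1" "c1 \<le> c2" "c2 \<le> pihat p r t"
      unfolding c1_def c2_def using pihat_nonneg pihat_mono[OF pp] l1 by auto
    have DrF: "Dr n a r sel p G \<tau> i = (X G \<tau> i - c2)/(1-c2) - (X G0 (\<tau> - 1) i - c1)/(1-c1)" if "G \<in> F" for G
    proof -
      have e: "Ps G \<tau> i = Ps G0 \<tau> i" using that Fdef by simp
      show ?thesis unfolding Dr_def piproc_len c1_def c2_def
        using Ps_eqD(1)[OF e, of \<tau>] Ps_eqD(1)[OF e, of "\<tau> - 1"] Ps_eqD(2)[OF e, of "\<tau> - 1" i] tau by simp
    qed
    consider "X G0 (\<tau> - 1) i = 1" | "X G0 (\<tau> - 1) i = 0" using Xind_01 by blast
    then show ?thesis
    proof cases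
      case 1
      have D0: "Dr n a r sel p G \<tau> i = 0" if "G \<in> F" for G
      proof -
        have e: "Ps G \<tau> i = Ps G0 \<tau> i" using that Fdef by simp
        have "X G (\<tau> - 1) i = 1" using Ps_eqD(2)[OF e, of "\<tau> - 1" i] tau 1 by simp
        hence "X G \<tau> i = 1" using Xind_mono[of "\<tau> - 1" \<tau> G i] Xind_01[of G \<tau> i] by auto
        thus ?thesis using DrF[OF that] 1 c ct by simp
      qed
      show ?thesis using D0 vr0 Pnn by simp
    next
      case 2
      note x0 = 2
      define u where "u = 1/(1-c2)"
      define d0 where "d0 = c1/(1-c1) - c2/(1-c2)"
      have pos: "0 < 1 - c1" "0 < 1 - c2" using c ct by auto
      have x01: "X G \<tau> i = 0 \<or> X G \<tau> i = 1" for G using Xind_01 .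
      have DrF': "Dr n a r sel p G \<tau> i = X G \<tau> i * u + d0" if "G \<in> F" for G
        unfolding DrF[OF that] x0 u_def d0_def by (simp add: diff_divide_distrib)
      have Dr2: "(Dr n a r sel p G \<tau> i)\<^sup>2 = X G \<tau> i * (u\<^sup>2 + 2*u*d0) + d0\<^sup>2" if "G \<in> F" for G
      proof -
        have "(X G \<tau> i)\<^sup>2 = X G \<tau> i" using x01[of G] by auto
        thus ?thesis unfolding DrF'[OF that] by (simp add: power2_eq_square algebra_simps)
      qed
      define \<beta> where "\<beta> = measure_pmf.prob (Pi_pmf (edge_slots n - incid (a+i)) False (\<lambda>_. bernoulli_pmf p)) {H. Ps H \<tau> i = Ps G0 \<tau> i}"
      have b0: "0 \<le> \<beta>" unfolding \<beta>_def by simp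
      have F1: "{G\<in>F. X G \<tau> i = 1} = {G\<in>set_pmf (gnp n p). Ps G \<tau> i = Ps G0 \<tau> i \<and> X G \<tau> i = 1}"
        unfolding Fdef by auto
      have P: "(\<Sum>G\<in>F. ?w G) = \<beta> * (1 - c1)"
        unfolding Fdef c1_def \<beta>_def by (rule key(1)[OF p tau(1) i x0])
      have A: "(\<Sum>G\<in>{G\<in>F. X G \<tau> i = 1}. ?w G) = \<beta> * (c2 - c1)"
        unfolding F1 c1_def c2_def \<beta>_def by (rule key(2)[OF p tau(1) i x0])
      have S1: "(\<Sum>G\<in>F. ?w G * Dr n a r sel p G \<tau> i) = \<beta> * (c2 - c1) * u + \<beta> * (1 - c1) * d0"
      proof -
        have "(\<Sum>G\<in>F. ?w G * Dr n a r sel p G \<tau> i) = (\<Sum>G\<in>F. ?w G * (X G \<tau> i * u + d0))"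
          using DrF' by (intro sum.cong refl) auto
        also have "\<dots> = (\<Sum>G\<in>{G\<in>F. X G \<tau> i = 1}. ?w G) * u + (\<Sum>G\<in>F. ?w G) * d0"
          by (rule sum_X_split[OF finF x01])
        finally show ?thesis using P A by simp
      qed
      have S2: "(\<Sum>G\<in>F. ?w G * (Dr n a r sel p G \<tau> i)\<^sup>2) = \<beta> * (c2 - c1) * (u\<^sup>2 + 2*u*d0) + \<beta> * (1 - c1) * d0\<^sup>2"
      proof -
        have "(\<Sum>G\<in>F. ?w G * (Dr n a r sel p G \<tau> i)\<^sup>2) = (\<Sum>G\<in>F. ?w G * (X G \<tau> i * (u\<^sup>2 + 2*u*d0) + d0\<^sup>2))"
          using Dr2 by (intro sum.cong refl) auto
        also have "\<dots> = (\<Sum>G\<in>{G\<in>F. X G \<tau> i = 1}. ?w G) * (u\<^sup>2 + 2*u*d0) + (\<Sum>G\<in>F. ?w G) * d0\<^sup>2"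
          by (rule sum_X_split[OF finF x01])
        finally show ?thesis using P A by simp
      qed
      have mean: "(\<Sum>G\<in>F. ?w G * Dr n a r sel p G \<tau> i) = 0"
        unfolding S1 u_def d0_def using mean_alg[of c1 c2 \<beta>] pos by simp
      have var: "(\<Sum>G\<in>F. ?w G * (Dr n a r sel p G \<tau> i)\<^sup>2) \<le> vr * (\<Sum>G\<in>F. ?w G)"
      proof (cases "length (Z G0 (\<tau> - 1)) = length (Z G0 \<tau>)")
        case True
        hence "c1 = c2" unfolding c1_def c2_def by simp
        hence "d0 = 0" unfolding d0_def by simp
        hence "(\<Sum>G\<in>F. ?w G * (Dr n a r sel p G \<tau> i)\<^sup>2) = 0" unfolding S2 using \<open>c1 = c2\<close> by simp
        thus ?thesis using vr0 Pnn by simp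
      next
        case False
        define T where "T = Tstop n a r sel G0"
        have "min (\<tau> - 1) T \<noteq> min \<tau> T" using False unfolding len_min T_def by simp
        hence "\<tau> \<le> T" by auto
        hence "length (Z G0 (\<tau> - 1)) = \<tau> - 1" "length (Z G0 \<tau>) = \<tau>" unfolding len_min T_def by auto
        hence ce: "c1 = pihat p r (\<tau> - 1)" "c2 = pihat p r \<tau>" unfolding c1_def c2_def by auto
        have "(\<Sum>G\<in>F. ?w G * (Dr n a r sel p G \<tau> i)\<^sup>2) \<le> (c2-c1)/(1-pihat p r t)^3 * (\<beta>*(1-c1))"
          unfolding S2 u_def d0_def by (rule var_alg[OF b0 c ct])
        thus ?thesis unfolding vr_def P ce .
      qed
      show ?thesis using mean var by simp
    qed
  qed
  show "(\<Sum>G\<in>{G\<in>set_pmf (gnp n p). Ps G \<tau> i = y}. pmf (gnp n p) G * Dr n a r sel p G \<tau> i) = 0"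
    using res unfolding F_def by simp
  show "(\<Sum>G\<in>{G\<in>set_pmf (gnp n p). Ps G \<tau> i = y}. pmf (gnp n p) G * (Dr n a r sel p G \<tau> i)\<^sup>2)
         \<le> (pihat p r \<tau> - pihat p r (\<tau> - 1)) / (1 - pihat p r t)^3 * (\<Sum>G\<in>{G\<in>set_pmf (gnp n p). Ps G \<tau> i = y}. pmf (gnp n p) G)"
    using res unfolding F_def vr_def by simp
qed

end


definition dec :: "nat \<Rightarrow> nat \<Rightarrow> nat \<times> nat" where
  "dec N k = ((k - 1) div N + 1, (k - 1) mod N + 1)"

lemma dec_shift:
  assumes "1 \<le> j" "j \<le> N"
  shows "dec N (s * N + j) = (s + 1, j)"
proof -
  have N: "N \<noteq> 0" using assms by auto
  have e: "s * N + j - 1 = (j - 1) + s * N" using assms by simp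
  have "dec N (s * N + j) = ((j - 1 + s * N) div N + 1, (j - 1 + s * N) mod N + 1)"
    by (simp only: dec_def e)
  also have "(j - 1 + s * N) div N = s + (j - 1) div N" using N by simp
  also have "(j - 1 + s * N) mod N = (j - 1) mod N" by simp
  finally have d: "dec N (s * N + j) = (s + (j - 1) div N + 1, (j - 1) mod N + 1)" .
  have "(j - 1) div N = 0" "(j - 1) mod N = j - 1" using assms by auto
  thus ?thesis using d assms by simp
qed

lemma sum_dec_block:
  assumes "i \<le> N"
  shows "(\<Sum>l = s*N + 1..s*N + i. f (dec N l)) = (\<Sum>j = 1..i. f (s + 1, j))"
proof -
  have "(\<Sum>l = s*N + 1..s*N + i. f (dec N l)) = (\<Sum>l = 1 + s*N..i + s*N. f (dec N l))" by (simp add: add.commute)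
  also have "\<dots> = (\<Sum>j = 1..i. f (dec N (j + s*N)))" by (rule sum.shift_bounds_cl_nat_ivl)
  also have "\<dots> = (\<Sum>j = 1..i. f (s + 1, j))"
  proof (intro sum.cong refl)
    fix j assume "j \<in> {1..i}"
    hence "dec N (j + s*N) = (s+1, j)" using dec_shift[of j N s] assms by (simp add: add.commute)
    thus "f (dec N (j + s * N)) = f (s + 1, j)" by simp
  qed
  finally show ?thesis .
qed

lemma sum_split_at:
  fixes f :: "nat \<Rightarrow> real"
  shows "(\<Sum>l = 1..m + k. f l) = (\<Sum>l = 1..m. f l) + (\<Sum>l = m + 1..m + k. f l)"
  by (rule sum.ub_add_nat) simp

lemma dec_range:
  assumes "k \<in> {1..t * N}"
  shows "1 \<le> fst (dec N k)" "fst (dec N k) \<le> t" "snd (dec N k) \<in> {1..N}"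
proof -
  have N: "0 < N" using assms by (cases N) auto
  have "k - 1 < t * N" using assms by auto
  hence "(k - 1) div N < t" by (rule less_mult_imp_div_less)
  thus "1 \<le> fst (dec N k)" "fst (dec N k) \<le> t" unfolding dec_def by auto
  have "(k - 1) mod N < N" using N by simp
  thus "snd (dec N k) \<in> {1..N}" unfolding dec_def by auto
qed

lemma dec_lt:
  assumes "1 \<le> l" "l < k"
  shows "fst (dec N l) < fst (dec N k) \<or> (fst (dec N l) = fst (dec N k) \<and> snd (dec N l) < snd (dec N k))"
proof -
  define x y where "x = l - 1" and "y = k - 1"
  have xy: "x < y" using assms by (simp add: x_def y_def)
  have le: "x div N \<le> y div N" using xy by (simp add: div_le_mono)
  have "x mod N < y mod N" if "x div N = y div N"
  proof -
    have "x = N * (x div N) + x mod N" "y = N * (y div N) + y mod N" by simp_all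
    moreover have "N * (x div N) = N * (y div N)" using that by simp
    ultimately show ?thesis using xy by linarith
  qed
  thus ?thesis using le unfolding dec_def x_def[symmetric] y_def[symmetric] by force
qed

context proc
begin

definition gg :: "real \<Rightarrow> graph \<Rightarrow> nat \<Rightarrow> nat \<Rightarrow> real" where
  "gg p G s j = (X G s j - piproc n a r sel p G s) / (1 - piproc n a r sel p G s)"

lemma Dr_gg: "Dr n a r sel p G s j = gg p G s j - gg p G (s - 1) j"
  unfolding Dr_def gg_def ..

lemma gg0: "0 \<le> p \<Longrightarrow> p \<le> 1 \<Longrightarrow> gg p G 0 j = 0"
  unfolding gg_def piproc_len using Xind_0 pihat_0[of p r] r_pos by simp

lemma rows:
  assumes p: "0 \<le> p" "p \<le> 1"
  shows "(\<Sum>l = 1..s * (n - a). Dr n a r sel p G (fst (dec (n - a) l)) (snd (dec (n - a) l)))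
         = (\<Sum>j = 1..n - a. gg p G s j)"
proof (induction s)
  case 0 then show ?case using gg0[OF p] by simp
next
  case (Suc s)
  let ?N = "n - a"
  have "(\<Sum>l = 1..Suc s * ?N. Dr n a r sel p G (fst (dec ?N l)) (snd (dec ?N l)))
     = (\<Sum>l = 1..s * ?N. Dr n a r sel p G (fst (dec ?N l)) (snd (dec ?N l)))
       + (\<Sum>l = s * ?N + 1..s * ?N + ?N. Dr n a r sel p G (fst (dec ?N l)) (snd (dec ?N l)))"
    using sum_split_at[of _ "s * ?N" ?N] by (simp add: add.commute)
  also have "(\<Sum>l = s * ?N + 1..s * ?N + ?N. Dr n a r sel p G (fst (dec ?N l)) (snd (dec ?N l)))
      = (\<Sum>j = 1..?N. Dr n a r sel p G (s + 1) j)"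
    using sum_dec_block[of ?N ?N "\<lambda>x. Dr n a r sel p G (fst x) (snd x)" s] by simp
  also have "\<dots> = (\<Sum>j = 1..?N. gg p G (Suc s) j) - (\<Sum>j = 1..?N. gg p G s j)"
    by (simp add: Dr_gg sum_subtractf)
  finally show ?case using Suc by simp
qed

lemma telescope:
  assumes p: "0 \<le> p" "p \<le> 1" and tau: "1 \<le> \<tau>" and i: "1 \<le> i" "i \<le> n - a"
  shows "(\<Sum>l = 1..(\<tau> - 1) * (n - a) + i. Dr n a r sel p G (fst (dec (n - a) l)) (snd (dec (n - a) l)))
         = Mart n a r sel p G \<tau> i"
proof -
  let ?N = "n - a"
  have "(\<Sum>l = 1..(\<tau> - 1) * ?N + i. Dr n a r sel p G (fst (dec ?N l)) (snd (dec ?N l)))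
     = (\<Sum>l = 1..(\<tau> - 1) * ?N. Dr n a r sel p G (fst (dec ?N l)) (snd (dec ?N l)))
       + (\<Sum>l = (\<tau> - 1) * ?N + 1..(\<tau> - 1) * ?N + i. Dr n a r sel p G (fst (dec ?N l)) (snd (dec ?N l)))"
    by (rule sum_split_at)
  also have "(\<Sum>l = (\<tau> - 1) * ?N + 1..(\<tau> - 1) * ?N + i. Dr n a r sel p G (fst (dec ?N l)) (snd (dec ?N l)))
      = (\<Sum>j = 1..i. Dr n a r sel p G (\<tau> - 1 + 1) j)"
    using sum_dec_block[of i ?N "\<lambda>x. Dr n a r sel p G (fst x) (snd x)" "\<tau> - 1"] i by simp
  also have "\<dots> = (\<Sum>j = 1..i. gg p G \<tau> j) - (\<Sum>j = 1..i. gg p G (\<tau> - 1) j)"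
    using tau by (simp add: Dr_gg sum_subtractf)
  also have "(\<Sum>l = 1..(\<tau> - 1) * ?N. Dr n a r sel p G (fst (dec ?N l)) (snd (dec ?N l)))
      = (\<Sum>j = 1..?N. gg p G (\<tau> - 1) j)" by (rule rows[OF p])
  also have "(\<Sum>j = 1..?N. gg p G (\<tau> - 1) j) = (\<Sum>j = 1..i. gg p G (\<tau> - 1) j) + (\<Sum>j = i + 1..i + (?N - i). gg p G (\<tau> - 1) j)"
    using sum_split_at[of "gg p G (\<tau> - 1)" i "?N - i"] i by simp
  finally show ?thesis unfolding Mart_def gg_def using i by simp
qed

lemma Mart0:
  assumes p: "0 \<le> p" "p \<le> 1"
  shows "Mart n a r sel p G 0 (n - a) = 0"
  unfolding Mart_def piproc_len using Xind_0 pihat_0[OF p, of r] r_pos by simp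

end


lemma vsum:
  fixes f :: "nat \<Rightarrow> real"
  shows "(\<Sum>k = 1..s * N. f (fst (dec N k)) - f (fst (dec N k) - 1)) = real N * (f s - f 0)"
proof (induction s)
  case 0 then show ?case by simp
next
  case (Suc s)
  have "(\<Sum>k = 1..Suc s * N. f (fst (dec N k)) - f (fst (dec N k) - 1))
     = (\<Sum>k = 1..s * N. f (fst (dec N k)) - f (fst (dec N k) - 1))
       + (\<Sum>k = s * N + 1..s * N + N. f (fst (dec N k)) - f (fst (dec N k) - 1))"
    using sum_split_at[of _ "s * N" N] by (simp add: add.commute)
  also have "(\<Sum>k = s * N + 1..s * N + N. f (fst (dec N k)) - f (fst (dec N k) - 1))
     = (\<Sum>j = 1..N. f (s + 1) - f s)"
    using sum_dec_block[of N N "\<lambda>x. f (fst x) - f (fst x - 1)" s] by simp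
  also have "\<dots> = real N * (f (Suc s) - f s)" by simp
  finally show ?case using Suc by (simp add: algebra_simps)
qed

context proc
begin

lemma sum_w_one: "(\<Sum>G\<in>set_pmf (gnp n p). pmf (gnp n p) G) = 1"
  using sum_pmf_eq[of p "\<lambda>_. True"] by simp

lemma tail:
  assumes p: "0 < p" "p < 1" and lam: "0 < lam" and sg: "\<sigma> = 1 \<or> \<sigma> = -1"
  shows "measure_pmf.prob (gnp n p) {G. \<exists>\<tau> i. round_in n a t \<tau> i \<and> lam \<le> \<sigma> * Mart n a r sel p G \<tau> i}
    \<le> exp (- (lam\<^sup>2 * (1 - pihat p r t) ^ 3) / (2 * (real n * pihat p r t + lam / 3)))"
proof -
  define N where "N = n - a"
  define K where "K = t * N"
  define \<Omega> where "\<Omega> = set_pmf (gnp n p)"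
  define w where "w = pmf (gnp n p)"
  define D where "D k G = \<sigma> * Dr n a r sel p G (fst (dec N k)) (snd (dec N k))" for k G
  define \<psi> where "\<psi> k G = Ps G (fst (dec N k)) (snd (dec N k))" for k G
  define ct where "ct = pihat p r t"
  define cc where "cc = (1 - ct)^3"
  define v where "v k = (pihat p r (fst (dec N k)) - pihat p r (fst (dec N k) - 1)) / cc" for k
  define b where "b = 1 / cc"
  have pp: "0 \<le> p" "p \<le> 1" using p by auto
  have ct1: "ct < 1" unfolding ct_def using pihat_lt1[of p r t] p r_pos by simp
  have ct0: "0 \<le> ct" unfolding ct_def by (rule pihat_nonneg)
  have ccp: "0 < cc" unfolding cc_def using ct1 by simp
  have s2: "\<sigma>\<^sup>2 = 1" using sg by auto
  have fr: "E \<le> exp (- lam\<^sup>2 / (2 * ((\<Sum>k=1..K. v k) + b * lam / 3))) * (\<Sum>G\<in>\<Omega>. w G)"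
    if "E = (\<Sum>G\<in>{G\<in>\<Omega>. \<exists>m\<in>{1..K}. lam \<le> (\<Sum>l=1..m. D l G)}. w G)" for E
    unfolding that
  proof (rule freedman_fin)
    show "finite \<Omega>" unfolding \<Omega>_def by (rule finite_gnp)
    show "0 \<le> w G" for G unfolding w_def by simp
    show "(\<Sum>G\<in>{G\<in>\<Omega>. \<psi> k G = y}. w G * D k G) = 0" if k: "k \<in> {1..K}" for k y
    proof -
      note dr = dec_range[OF k[unfolded K_def]]
      have dr3: "snd (dec N k) \<in> {1..n - a}" using dr(3) unfolding N_def .
      have "(\<Sum>G\<in>{G\<in>\<Omega>. \<psi> k G = y}. w G * D k G)
          = \<sigma> * (\<Sum>G\<in>{G\<in>\<Omega>. \<psi> k G = y}. w G * Dr n a r sel p G (fst (dec N k)) (snd (dec N k)))"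
        unfolding D_def by (simp add: sum_distrib_left mult_ac)
      also have "(\<Sum>G\<in>{G\<in>\<Omega>. \<psi> k G = y}. w G * Dr n a r sel p G (fst (dec N k)) (snd (dec N k))) = 0"
        unfolding \<Omega>_def w_def \<psi>_def by (rule atom(1)[OF p dr(1) dr(2) dr3])
      finally show ?thesis by simp
    qed
    show "(\<Sum>G\<in>{G\<in>\<Omega>. \<psi> k G = y}. w G * (D k G)\<^sup>2) \<le> v k * (\<Sum>G\<in>{G\<in>\<Omega>. \<psi> k G = y}. w G)"
      if k: "k \<in> {1..K}" for k y
    proof -
      note dr = dec_range[OF k[unfolded K_def]]
      have dr3: "snd (dec N k) \<in> {1..n - a}" using dr(3) unfolding N_def .
      have "(\<Sum>G\<in>{G\<in>\<Omega>. \<psi> k G = y}. w G * (D k G)\<^sup>2)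
          = (\<Sum>G\<in>{G\<in>\<Omega>. \<psi> k G = y}. w G * (Dr n a r sel p G (fst (dec N k)) (snd (dec N k)))\<^sup>2)"
        unfolding D_def by (simp add: power_mult_distrib s2)
      also have "\<dots> \<le> v k * (\<Sum>G\<in>{G\<in>\<Omega>. \<psi> k G = y}. w G)"
        unfolding \<Omega>_def w_def \<psi>_def v_def cc_def ct_def by (rule atom(2)[OF p dr(1) dr(2) dr3])
      finally show ?thesis .
    qed
    show "D k G \<le> b" if k: "k \<in> {1..K}" "G \<in> \<Omega>" for k G
    proof -
      note dr = dec_range[OF k(1)[unfolded K_def]]
      note bb = Dr_bnd[OF p dr(1) dr(2), of G "snd (dec N k)"]
      show ?thesis using sg bb unfolding D_def b_def cc_def ct_def by auto
    qed
    show "D l G = D l G'" if k: "k \<in> {1..K}" "1 \<le> l" "l < k" "G \<in> \<Omega>" "G' \<in> \<Omega>" "\<psi> k G = \<psi> k G'" for k l G G'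
    proof -
      have e: "Ps G (fst (dec N k)) (snd (dec N k)) = Ps G' (fst (dec N k)) (snd (dec N k))"
        using k(6) unfolding \<psi>_def .
      have "1 \<le> fst (dec N l)" unfolding dec_def by simp
      thus ?thesis unfolding D_def using Dr_meas[OF e _ dec_lt[OF k(2,3)]] by simp
    qed
    show "0 \<le> v k" for k
      unfolding v_def using pihat_mono[OF pp, of "fst (dec N k) - 1" "fst (dec N k)" r] ccp by simp
    show "0 < b" unfolding b_def using ccp by simp
    show "0 < lam" by fact
  qed
  have V: "(\<Sum>k=1..K. v k) = real N * ct / cc"
  proof -
    have "(\<Sum>k=1..K. v k) = (\<Sum>k=1..t * N. pihat p r (fst (dec N k)) - pihat p r (fst (dec N k) - 1)) / cc"
      unfolding v_def K_def by (simp add: sum_divide_distrib)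
    also have "\<dots> = real N * (pihat p r t - pihat p r 0) / cc" using vsum[of "pihat p r" N t] by simp
    finally show ?thesis using pihat_0[OF pp r_pos] unfolding ct_def by simp
  qed
  have expb: "exp (- lam\<^sup>2 / (2 * ((\<Sum>k=1..K. v k) + b * lam / 3)))
      \<le> exp (- (lam\<^sup>2 * (1 - pihat p r t) ^ 3) / (2 * (real n * pihat p r t + lam / 3)))"
  proof -
    have e: "(\<Sum>k=1..K. v k) + b * lam / 3 = (real N * ct + lam / 3) / cc"
      unfolding V b_def using ccp by (simp add: field_simps)
    have Nn: "real N \<le> real n" unfolding N_def by simp
    have d1: "0 < 2 * (real N * ct + lam / 3)" using lam ct0 by (simp add: add_nonneg_pos)
    have d2: "2 * (real N * ct + lam / 3) \<le> 2 * (real n * ct + lam / 3)"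
      using Nn ct0 by (simp add: mult_right_mono)
    have "lam\<^sup>2 * cc / (2 * (real n * ct + lam / 3)) \<le> lam\<^sup>2 * cc / (2 * (real N * ct + lam / 3))"
      using d1 d2 ccp by (intro divide_left_mono) auto
    moreover have "- lam\<^sup>2 / (2 * ((\<Sum>k=1..K. v k) + b * lam / 3)) = - (lam\<^sup>2 * cc / (2 * (real N * ct + lam / 3)))"
      unfolding e using ccp d1 by (simp add: field_simps)
    ultimately show ?thesis unfolding cc_def ct_def by simp
  qed
  have incl: "{G\<in>\<Omega>. \<exists>\<tau> i. round_in n a t \<tau> i \<and> lam \<le> \<sigma> * Mart n a r sel p G \<tau> i}
      \<subseteq> {G\<in>\<Omega>. \<exists>m\<in>{1..K}. lam \<le> (\<Sum>l=1..m. D l G)}"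
  proof safe
    fix G \<tau> i assume G: "G \<in> \<Omega>" and ri: "round_in n a t \<tau> i" and le: "lam \<le> \<sigma> * Mart n a r sel p G \<tau> i"
    have "\<not> (\<tau> = 0 \<and> i = n - a)" using le lam Mart0[OF pp, of G] by auto
    hence r: "1 \<le> \<tau>" "\<tau> \<le> t" "1 \<le> i" "i \<le> N" using ri unfolding round_in_def N_def by auto
    define m where "m = (\<tau> - 1) * N + i"
    have "(\<tau> - 1) * N + i \<le> (\<tau> - 1) * N + N" using r by simp
    also have "\<dots> = \<tau> * N" using r by (cases \<tau>) auto
    also have "\<dots> \<le> t * N" using r by simp
    finally have mK: "m \<in> {1..K}" using r unfolding m_def K_def by auto
    have "(\<Sum>l=1..m. D l G) = \<sigma> * Mart n a r sel p G \<tau> i"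
      unfolding D_def m_def using telescope[OF pp r(1) r(3) r(4)[unfolded N_def]]
      by (simp add: sum_distrib_left[symmetric] N_def)
    hence "lam \<le> (\<Sum>l=1..m. D l G)" using le by simp
    thus "\<exists>m\<in>{1..K}. lam \<le> (\<Sum>l=1..m. D l G)" using mK by blast
  qed
  have "measure_pmf.prob (gnp n p) {G. \<exists>\<tau> i. round_in n a t \<tau> i \<and> lam \<le> \<sigma> * Mart n a r sel p G \<tau> i}
      = (\<Sum>G\<in>{G\<in>\<Omega>. \<exists>\<tau> i. round_in n a t \<tau> i \<and> lam \<le> \<sigma> * Mart n a r sel p G \<tau> i}. w G)"
    unfolding \<Omega>_def w_def by (rule sum_pmf_eq[symmetric])
  also have "\<dots> \<le> (\<Sum>G\<in>{G\<in>\<Omega>. \<exists>m\<in>{1..K}. lam \<le> (\<Sum>l=1..m. D l G)}. w G)"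
    using incl finite_gnp unfolding \<Omega>_def w_def by (intro sum_mono2) auto
  also have "\<dots> \<le> exp (- lam\<^sup>2 / (2 * ((\<Sum>k=1..K. v k) + b * lam / 3))) * (\<Sum>G\<in>\<Omega>. w G)"
    by (rule fr) (rule refl)
  also have "(\<Sum>G\<in>\<Omega>. w G) = 1" unfolding \<Omega>_def w_def by (rule sum_w_one)
  finally have h: "measure_pmf.prob (gnp n p) {G. \<exists>\<tau> i. round_in n a t \<tau> i \<and> lam \<le> \<sigma> * Mart n a r sel p G \<tau> i}
      \<le> exp (- lam\<^sup>2 / (2 * ((\<Sum>k=1..K. v k) + b * lam / 3)))" by (simp only: mult_1_right)
  show ?thesis using h expb by (rule order.trans)
qed

end

theorem lemma2:
  fixes n a r t :: nat and p lam :: real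
    and sel :: "nat list \<Rightarrow> nat set \<Rightarrow> nat"
  assumes "r \<ge> 2" and "0 < p" and "p < 1" and "a \<le> n"
    and "\<And>xs S. finite S \<Longrightarrow> S \<noteq> {} \<Longrightarrow> sel xs S \<in> S"
    and "t \<le> n" and "lam > 0"
  shows "measure_pmf.prob (gnp n p)
           {G. \<forall>\<tau> i. round_in n a t \<tau> i \<longrightarrow> Mart n a r sel p G \<tau> i > - lam}
         \<ge> 1 - exp (- (lam\<^sup>2 * (1 - pihat p r t) ^ 3) / (2 * (real n * pihat p r t + lam / 3)))
       \<and> measure_pmf.prob (gnp n p)
           {G. \<forall>\<tau> i. round_in n a t \<tau> i \<longrightarrow> Mart n a r sel p G \<tau> i < lam}
         \<ge> 1 - exp (- (lam\<^sup>2 * (1 - pihat p r t) ^ 3) / (2 * (real n * pihat p r t + lam / 3)))"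
proof -
  interpret proc n a r sel
    using assms by unfold_locales auto
  let ?e = "exp (- (lam\<^sup>2 * (1 - pihat p r t) ^ 3) / (2 * (real n * pihat p r t + lam / 3)))"
  have compl: "measure_pmf.prob (gnp n p) (UNIV - A) = 1 - measure_pmf.prob (gnp n p) A" for A
    using measure_pmf.prob_compl[of A "gnp n p"] by simp
  have up: "{G. \<forall>\<tau> i. round_in n a t \<tau> i \<longrightarrow> Mart n a r sel p G \<tau> i < lam}
      = UNIV - {G. \<exists>\<tau> i. round_in n a t \<tau> i \<and> lam \<le> 1 * Mart n a r sel p G \<tau> i}"
    by (auto simp: not_le[symmetric] simp del: not_le)
  have lo: "{G. \<forall>\<tau> i. round_in n a t \<tau> i \<longrightarrow> Mart n a r sel p G \<tau> i > - lam}
      = UNIV - {G. \<exists>\<tau> i. round_in n a t \<tau> i \<and> lam \<le> (-1) * Mart n a r sel p G \<tau> i}"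
  proof -
    have e: "(- lam < Mart n a r sel p G \<tau> i) \<longleftrightarrow> \<not> (lam \<le> (-1) * Mart n a r sel p G \<tau> i)" for G \<tau> i by auto
    show ?thesis by (simp only: e) blast
  qed
  show ?thesis
    unfolding up lo compl
    using tail[of p lam 1 t] tail[of p lam "-1" t] assms by auto
qed


end
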